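(* Let $(P,Q):[\tau_0,\infty)\times S^1\to\mathbb{R}^2$ be a smooth solution of \[ P_{\tau\tau}-e^{-2\tau}P_{\theta\theta}-e^{2P}(Q_\tau^2-e^{-2\tau}Q_\theta^2)=0,\qquad Q_{\tau\tau}-e^{-2\tau}Q_{\theta\theta}+2(P_\tau Q_\tau-e^{-2\tau}P_\theta Q_\theta)=0, \] with $\tau_0\ge2$, such that for some $\gamma>0$ and all $\theta\in S^1$, $1\le P(\tau_0,\theta)\le\tau_0-1$ and $\gamma\le P(\tau_0,\theta)/\tau_0\le1-\gamma$, and $F(\tau_0)\le(\gamma-\alpha)^2$ for some $0<\alpha<\gamma$. Then $H_1$ is bounded on $[\tau_0,\infty)$.
   Context: $S^1=\mathbb{R}/2\pi\mathbb{Z}$. The function $F$ is \[ F(\tau)=\tfrac12\sup_{\theta\in S^1}\Big[(P_\tau-\tfrac1\tau P+e^{-\tau}P_\theta)^2+e^{2P}(Q_\tau+e^{-\tau}Q_\theta)^2\Big] +\tfrac12\sup_{\theta\in S^1}\Big[(P_\tau-\tfrac1\tau P-e^{-\tau}P_\theta)^2+e^{2P}(Q_\tau-e^{-\tau}Q_\theta)^2\Big]. \] For $k\ge0$ define the energies \[ \mathcal{E}_k=\tfrac12\int_{S^1}[(\partial_\theta^k\partial_\tau P)^2+e^{-2\tau}(\partial_\theta^{k+1}P)^2]d\theta,\quad E_k=\tfrac12\int_{S^1}e^{2P}[(\partial_\theta^k\partial_\tau Q)^2+e^{-2\tau}(\partial_\theta^{k+1}Q)^2]d\theta, \] \[ H_k=1+\mathcal{E}_k+E_k+\tfrac12e^{-\alpha\tau}\int_{S^1}(\partial_\theta^kP)^2d\theta,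 \] with $\alpha$ the constant in the hypotheses. *)

theory Defs
  imports "HOL-Analysis.Analysis"
begin

text \<open>A function u on [t0,oo) x R is smooth with derivative family D, where
  D i j = (d/dtau)^i (d/dtheta)^j u : every D i j is jointly continuous on
  [t0,oo) x R, the (one-sided at t0) tau-derivative of D i j is D (i+1) j and
  the theta-derivative of D i j is D i (j+1).\<close>
definition smooth_family ::
  "real \<Rightarrow> (real \<Rightarrow> real \<Rightarrow> real) \<Rightarrow> (nat \<Rightarrow> nat \<Rightarrow> real \<Rightarrow> real \<Rightarrow> real) \<Rightarrow> bool" where
  "smooth_family t0 u D \<longleftrightarrow>
     (\<forall>t \<theta>. t0 \<le> t \<longrightarrow> D 0 0 t \<theta> = u t \<theta>) \<and>
     (\<forall>i j. continuous_on ({t0..} \<times> UNIV) (\<lambda>(t, \<theta>). D i j t \<theta>)) \<and>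
     (\<forall>i j t \<theta>. t0 \<le> t \<longrightarrow>
        ((\<lambda>s. D i j s \<theta>) has_real_derivative D (Suc i) j t \<theta>) (at t within {t0..}) \<and>
        ((\<lambda>\<phi>. D i j t \<phi>) has_real_derivative D i (Suc j) t \<theta>) (at \<theta>))"

text \<open>Functions on [t0,oo) x S^1, S^1 = R/2piZ, as 2pi-periodic functions in theta.\<close>
definition periodic_in_theta :: "real \<Rightarrow> (real \<Rightarrow> real \<Rightarrow> real) \<Rightarrow> bool" where
  "periodic_in_theta t0 u \<longleftrightarrow> (\<forall>t \<theta>. t0 \<le> t \<longrightarrow> u t (\<theta> + 2 * pi) = u t \<theta>)"

definition Ffun :: "(nat \<Rightarrow> nat \<Rightarrow> real \<Rightarrow> real \<Rightarrow> real) \<Rightarrow> (nat \<Rightarrow> nat \<Rightarrow> real \<Rightarrow> real \<Rightarrow> real) \<Rightarrow> real \<Rightarrow> real" where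
  "Ffun DP DQ t =
     1/2 * (SUP \<theta>\<in>{0..2*pi}. (DP 1 0 t \<theta> - DP 0 0 t \<theta> / t + exp (- t) * DP 0 1 t \<theta>)\<^sup>2
              + exp (2 * DP 0 0 t \<theta>) * (DQ 1 0 t \<theta> + exp (- t) * DQ 0 1 t \<theta>)\<^sup>2)
   + 1/2 * (SUP \<theta>\<in>{0..2*pi}. (DP 1 0 t \<theta> - DP 0 0 t \<theta> / t - exp (- t) * DP 0 1 t \<theta>)\<^sup>2
              + exp (2 * DP 0 0 t \<theta>) * (DQ 1 0 t \<theta> - exp (- t) * DQ 0 1 t \<theta>)\<^sup>2)"

definition curlyE :: "(nat \<Rightarrow> nat \<Rightarrow> real \<Rightarrow> real \<Rightarrow> real) \<Rightarrow> nat \<Rightarrow> real \<Rightarrow> real" where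
  "curlyE DP k t = 1/2 * integral {0..2*pi}
      (\<lambda>\<theta>. (DP 1 k t \<theta>)\<^sup>2 + exp (- 2 * t) * (DP 0 (Suc k) t \<theta>)\<^sup>2)"

definition Eng :: "(nat \<Rightarrow> nat \<Rightarrow> real \<Rightarrow> real \<Rightarrow> real) \<Rightarrow> (nat \<Rightarrow> nat \<Rightarrow> real \<Rightarrow> real \<Rightarrow> real) \<Rightarrow> nat \<Rightarrow> real \<Rightarrow> real" where
  "Eng DP DQ k t = 1/2 * integral {0..2*pi}
      (\<lambda>\<theta>. exp (2 * DP 0 0 t \<theta>) * ((DQ 1 k t \<theta>)\<^sup>2 + exp (- 2 * t) * (DQ 0 (Suc k) t \<theta>)\<^sup>2))"

definition Hk :: "real \<Rightarrow> (nat \<Rightarrow> nat \<Rightarrow> real \<Rightarrow> real \<Rightarrow> real) \<Rightarrow> (nat \<Rightarrow> nat \<Rightarrow> real \<Rightarrow> real \<Rightarrow> real) \<Rightarrow> nat \<Rightarrow> real \<Rightarrow> real" where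
  "Hk \<alpha> DP DQ k t = 1 + curlyE DP k t + Eng DP DQ k t
      + 1/2 * exp (- \<alpha> * t) * integral {0..2*pi} (\<lambda>\<theta>. (DP 0 k t \<theta>)\<^sup>2)"

end

theory Submission
  imports Defs
begin


lemma mono_from_deriv:
  fixes f f' :: "real \<Rightarrow> real"
  assumes d: "\<And>t. a \<le> t \<Longrightarrow> t \<le> b \<Longrightarrow> (f has_real_derivative f' t) (at t within {a..})"
    and n: "\<And>t. a \<le> t \<Longrightarrow> t \<le> b \<Longrightarrow> f' t \<ge> 0" and ab: "a \<le> b"
  shows "f a \<le> f b"
proof (rule DERIV_nonneg_imp_increasing_open[OF ab])
  fix x assume x: "a < x" "x < b"
  have "interior {a..} = {a<..}" by simp
  then have "at x within {a..} = at x" using x by (intro at_within_interior) auto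
  then show "\<exists>y. DERIV f x :> y \<and> 0 \<le> y" using d[of x] n[of x] x by auto
next
  show "continuous_on {a..b} f"
    unfolding continuous_on_eq_continuous_within
  proof
    fix x assume x: "x \<in> {a..b}"
    have "continuous (at x within {a..}) f" using d[of x] x by (auto intro: DERIV_continuous)
    then show "continuous (at x within {a..b}) f" by (rule continuous_within_subset) auto
  qed
qed

lemma touch_deriv:
  fixes \<phi> :: "real \<Rightarrow> real"
  assumes T: "T < \<tau>1" and d: "(\<phi> has_real_derivative d) (at \<tau>1 within {T..})"
    and neg: "\<And>s. T \<le> s \<Longrightarrow> s < \<tau>1 \<Longrightarrow> \<phi> s < 0" and z: "\<phi> \<tau>1 = 0"
  shows "d \<ge> 0"
proof -
  have d2: "(\<phi> has_real_derivative d) (at \<tau>1 within {T..\<tau>1})"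
    by (rule has_field_derivative_subset[OF d]) auto
  have "((\<lambda>y. (\<phi> y - \<phi> \<tau>1) / (y - \<tau>1)) \<longlongrightarrow> d) (at_left \<tau>1)"
    using d2 T unfolding has_field_derivative_iff by (simp add: at_within_Icc_at_left)
  moreover have "eventually (\<lambda>y. 0 \<le> (\<phi> y - \<phi> \<tau>1) / (y - \<tau>1)) (at_left \<tau>1)"
  proof -
    have "eventually (\<lambda>y. y \<in> {T<..<\<tau>1}) (at_left \<tau>1)"
      using T eventually_at_left_real by blast
    then show ?thesis
    proof (rule eventually_mono)
      fix y assume y: "y \<in> {T<..<\<tau>1}"
      then have "\<phi> y < 0" using neg by auto
      then show "0 \<le> (\<phi> y - \<phi> \<tau>1) / (y - \<tau>1)" using y z by (simp add: zero_le_divide_iff)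
    qed
  qed
  ultimately show ?thesis by (rule tendsto_lowerbound) simp
qed



lemma barrier:
  fixes G1 G2 :: "real \<Rightarrow> real \<Rightarrow> real" and B :: "real \<Rightarrow> real"
  assumes c1: "continuous_on ({T..} \<times> UNIV) (\<lambda>(t,\<theta>). G1 t \<theta>)"
    and c2: "continuous_on ({T..} \<times> UNIV) (\<lambda>(t,\<theta>). G2 t \<theta>)"
    and cB: "continuous_on {T..} B"
    and p1: "\<And>t \<theta>. T \<le> t \<Longrightarrow> \<exists>\<theta>0\<in>{0..2*pi}. G1 t \<theta> = G1 t \<theta>0"
    and p2: "\<And>t \<theta>. T \<le> t \<Longrightarrow> \<exists>\<theta>0\<in>{0..2*pi}. G2 t \<theta> = G2 t \<theta>0"
    and init: "\<And>\<theta> \<theta>'. G1 T \<theta> + G2 T \<theta>' < B T"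
    and step: "\<And>\<tau>1 \<theta>1 \<theta>1'. T < \<tau>1 \<Longrightarrow>
        (\<And>s \<theta> \<theta>'. T \<le> s \<Longrightarrow> s < \<tau>1 \<Longrightarrow> G1 s \<theta> + G2 s \<theta>' < B s) \<Longrightarrow>
        (\<And>\<theta> \<theta>'. G1 \<tau>1 \<theta> + G2 \<tau>1 \<theta>' \<le> B \<tau>1) \<Longrightarrow>
        G1 \<tau>1 \<theta>1 + G2 \<tau>1 \<theta>1' = B \<tau>1 \<Longrightarrow> False"
    and t: "T \<le> t"
  shows "G1 t \<theta> + G2 t \<theta>' < B t"
proof (rule ccontr)
  assume bad: "\<not> G1 t \<theta> + G2 t \<theta>' < B t"
  define f where "f z = G1 (fst z) (fst (snd z)) + G2 (fst z) (snd (snd z)) - B (fst z)" for z :: "real \<times> real \<times> real"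
  define S where "S = {T..t} \<times> ({0..2*pi} \<times> {0..2*pi::real})"
  define K where "K = S \<inter> f -` {0..}"
  have g1c: "continuous_on S (\<lambda>z. G1 (fst z) (fst (snd z)))"
    using continuous_on_compose2[OF c1 _ _, of S "\<lambda>z. (fst z, fst (snd z))"]
    by (force simp: S_def intro!: continuous_intros)
  have g2c: "continuous_on S (\<lambda>z. G2 (fst z) (snd (snd z)))"
    using continuous_on_compose2[OF c2 _ _, of S "\<lambda>z. (fst z, snd (snd z))"]
    by (force simp: S_def intro!: continuous_intros)
  have bc: "continuous_on S (\<lambda>z. B (fst z))"
    using continuous_on_compose2[OF cB continuous_on_fst[OF continuous_on_id], of S]
    by (auto simp: S_def intro!: continuous_intros)
  have fc: "continuous_on S f" unfolding f_def
    by (intro continuous_intros g1c g2c bc)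
  have "closed K" unfolding K_def
    by (rule continuous_closed_preimage[OF fc]) (auto simp: S_def intro!: closed_Times)
  moreover have "compact S" unfolding S_def by (intro compact_Times compact_Icc)
  ultimately have "compact (S \<inter> K)" by (rule compact_Int_closed[rotated])
  moreover have "S \<inter> K = K" by (auto simp: K_def)
  ultimately have "compact K" by simp
  then have cK: "compact (fst ` K)" by (intro compact_continuous_image continuous_intros)
  obtain a b where ab: "a \<in> {0..2*pi}" "G1 t \<theta> = G1 t a" "b \<in> {0..2*pi}" "G2 t \<theta>' = G2 t b"
    using p1[OF t] p2[OF t] by metis
  have "(t, a, b) \<in> K" using ab bad t by (auto simp: K_def S_def f_def)
  then have ne: "fst ` K \<noteq> {}" by blast
  obtain \<tau>1 where \<tau>1: "\<tau>1 \<in> fst ` K" "\<And>y. y \<in> fst ` K \<Longrightarrow> \<tau>1 \<le> y"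
    using compact_attains_inf[OF cK ne] by blast
  then obtain \<theta>1 \<theta>1' where K1: "(\<tau>1, \<theta>1, \<theta>1') \<in> K" by force
  have \<tau>1t: "T \<le> \<tau>1" "\<tau>1 \<le> t" using K1 by (auto simp: K_def S_def)
  have ge: "B \<tau>1 \<le> G1 \<tau>1 \<theta>1 + G2 \<tau>1 \<theta>1'" using K1 by (auto simp: K_def f_def)
  have Tl: "T < \<tau>1"
  proof (rule ccontr)
    assume "\<not> T < \<tau>1"
    then have "\<tau>1 = T" using \<tau>1t by auto
    then show False using ge init[of \<theta>1 \<theta>1'] by auto
  qed
  have strict: "G1 s x + G2 s y < B s" if s: "T \<le> s" "s < \<tau>1" for s x y
  proof (rule ccontr)
    assume nb: "\<not> G1 s x + G2 s y < B s"
    obtain a' b' where ab': "a' \<in> {0..2*pi}" "G1 s x = G1 s a'" "b' \<in> {0..2*pi}" "G2 s y = G2 s b'"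
      using p1[of s x] p2[of s y] s by metis
    have "(s, a', b') \<in> K" using ab' nb s \<tau>1t by (auto simp: K_def S_def f_def)
    then have "\<tau>1 \<le> s" using \<tau>1(2) by force
    then show False using s by auto
  qed
  have le: "G1 \<tau>1 x + G2 \<tau>1 y \<le> B \<tau>1" for x y
  proof -
    define h where "h s = G1 s x + G2 s y - B s" for s
    have hc1: "continuous_on {T..} (\<lambda>s. G1 s x)"
      using continuous_on_compose2[OF c1 _ _, of "{T..}" "\<lambda>s. (s, x)"] by (force intro!: continuous_intros)
    have hc2: "continuous_on {T..} (\<lambda>s. G2 s y)"
      using continuous_on_compose2[OF c2 _ _, of "{T..}" "\<lambda>s. (s, y)"] by (force intro!: continuous_intros)
    have "continuous_on {T..} h" unfolding h_def by (intro continuous_intros hc1 hc2 cB)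
    then have "(h \<longlongrightarrow> h \<tau>1) (at \<tau>1 within {T..})"
      using \<tau>1t by (simp add: continuous_on_def)
    then have "(h \<longlongrightarrow> h \<tau>1) (at \<tau>1 within {T..\<tau>1})"
      by (rule tendsto_within_subset) auto
    then have lim: "(h \<longlongrightarrow> h \<tau>1) (at_left \<tau>1)" using Tl by (simp add: at_within_Icc_at_left)
    have "eventually (\<lambda>s. s \<in> {T<..<\<tau>1}) (at_left \<tau>1)"
      using Tl eventually_at_left_real by blast
    then have ev: "eventually (\<lambda>s. h s \<le> 0) (at_left \<tau>1)"
    proof (rule eventually_mono)
      fix s assume "s \<in> {T<..<\<tau>1}"
      then have "G1 s x + G2 s y < B s" using strict[of s x y] by auto
      then show "h s \<le> 0" by (simp add: h_def)
    qed
    have "h \<tau>1 \<le> 0" by (rule tendsto_upperbound[OF lim ev]) simp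
    then show ?thesis by (simp add: h_def)
  qed
  have "G1 \<tau>1 \<theta>1 + G2 \<tau>1 \<theta>1' = B \<tau>1" using le[of \<theta>1 \<theta>1'] ge by linarith
  then show False using step[OF Tl strict le] by blast
qed



lemma chain_char:
  fixes f ft fth :: "real \<Rightarrow> real \<Rightarrow> real"
  assumes dt: "\<And>t \<theta>. T \<le> t \<Longrightarrow> ((\<lambda>s. f s \<theta>) has_real_derivative ft t \<theta>) (at t within {T..})"
    and dth: "\<And>t \<theta>. T \<le> t \<Longrightarrow> ((\<lambda>\<phi>. f t \<phi>) has_real_derivative fth t \<theta>) (at \<theta>)"
    and cth: "continuous_on ({T..} \<times> UNIV) (\<lambda>(t,\<theta>). fth t \<theta>)"
    and s: "T \<le> s"
  shows "((\<lambda>s. f s (c + \<sigma> * exp (- s))) has_real_derivative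
           (ft s (c + \<sigma> * exp (- s)) - \<sigma> * exp (- s) * fth s (c + \<sigma> * exp (- s)))) (at s within {T..})"
proof -
  define g where "g s = (s, c + \<sigma> * exp (- s))" for s :: real
  have pd: "((\<lambda>(x, y). f x y) has_derivative (\<lambda>(tx, ty). ft x y * tx + blinfun_apply (blinfun_mult_right (fth x y)) ty))
      (at (x, y) within {T..} \<times> UNIV)" if x: "x \<in> {T..}" for x y
  proof (rule has_derivative_partialsI)
    show "((\<lambda>x. f x y) has_derivative (*) (ft x y)) (at x within {T..})"
      using dt[of x y] x by (simp add: has_field_derivative_def)
    show "((\<lambda>y. f x y) has_derivative blinfun_apply (blinfun_mult_right (fth x y))) (at y within UNIV)"
      if "x \<in> {T..}" "y \<in> UNIV" for x y
      using dth[of x y] that by (simp add: has_field_derivative_def)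
    have "continuous_on ({T..} \<times> UNIV) (\<lambda>(x, y). blinfun_mult_right (fth x y))"
      using cth by (auto simp: split_beta intro!: continuous_intros)
    then show "continuous (at (x, y) within {T..} \<times> UNIV) (\<lambda>(x, y). blinfun_mult_right (fth x y))"
      using x by (simp add: continuous_on_eq_continuous_within)
  qed auto
  have gd: "(g has_derivative (\<lambda>h. (h, - \<sigma> * exp (- s) * h))) (at s within {T..})"
    unfolding g_def
    by (auto intro!: derivative_eq_intros simp: algebra_simps)
  have "((\<lambda>x. (\<lambda>(x, y). f x y) (g x)) has_derivative
      (\<lambda>h. (\<lambda>(tx, ty). ft (fst (g s)) (snd (g s)) * tx + blinfun_apply (blinfun_mult_right (fth (fst (g s)) (snd (g s)))) ty)
          (h, - \<sigma> * exp (- s) * h))) (at s within {T..})"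
    apply (rule has_derivative_in_compose2[of "{T..} \<times> UNIV" _ "\<lambda>z. (\<lambda>(tx, ty). ft (fst z) (snd z) * tx + blinfun_apply (blinfun_mult_right (fth (fst z) (snd z))) ty)"])
    subgoal using pd by auto
    subgoal by (auto simp: g_def)
    subgoal using s by auto
    subgoal by (rule gd)
    done
  then have "((\<lambda>s. f s (c + \<sigma> * exp (- s))) has_derivative (\<lambda>h. ft s (c + \<sigma> * exp (- s)) * h + fth s (c + \<sigma> * exp (- s)) * (- \<sigma> * exp (- s) * h))) (at s within {T..})"
    by (simp add: g_def)
  then show ?thesis
    unfolding has_field_derivative_def
    by (rule has_derivative_eq_rhs) (auto simp: algebra_simps fun_eq_iff)
qed



lemma sf_eq: "smooth_family T u D \<Longrightarrow> T \<le> t \<Longrightarrow> D 0 0 t \<theta> = u t \<theta>"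
  by (simp add: smooth_family_def)
lemma sf_cont: "smooth_family T u D \<Longrightarrow> continuous_on ({T..} \<times> UNIV) (\<lambda>(t, \<theta>). D i j t \<theta>)"
  by (simp add: smooth_family_def)
lemma sf_dt: "smooth_family T u D \<Longrightarrow> T \<le> t \<Longrightarrow>
   ((\<lambda>s. D i j s \<theta>) has_real_derivative D (Suc i) j t \<theta>) (at t within {T..})"
  by (simp add: smooth_family_def)
lemma sf_dth: "smooth_family T u D \<Longrightarrow> T \<le> t \<Longrightarrow>
   ((\<lambda>\<phi>. D i j t \<phi>) has_real_derivative D i (Suc j) t \<theta>) (at \<theta>)"
  by (simp add: smooth_family_def)

lemma nbot_within: "T \<le> (t::real) \<Longrightarrow> at t within {T..} \<noteq> bot"
proof -
  assume "T \<le> t"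
  then have "at t within {t<..} \<le> at t within {T..}" by (intro at_le) auto
  moreover have "at t within {t<..} \<noteq> bot" by simp
  ultimately show ?thesis by (metis bot.extremum_unique)
qed

lemma sf_chain: "smooth_family T u D \<Longrightarrow> T \<le> s \<Longrightarrow>
  ((\<lambda>s. D i j s (c + \<sigma> * exp (- s))) has_real_derivative
     (D (Suc i) j s (c + \<sigma> * exp (- s)) - \<sigma> * exp (- s) * D i (Suc j) s (c + \<sigma> * exp (- s)))) (at s within {T..})"
  by (rule chain_char[where ft="D (Suc i) j" and fth="D i (Suc j)"]) (auto intro: sf_dt sf_dth sf_cont)

lemma sf_per:
  assumes sf: "smooth_family T u D" and per: "periodic_in_theta T u" and t: "T \<le> t"
  shows "D i j t (\<theta> + 2*pi) = D i j t \<theta>"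
  using t
proof (induction j arbitrary: t \<theta>)
  case 0
  then show ?case
  proof (induction i arbitrary: t \<theta>)
    case 0
    then show ?case using sf_eq[OF sf] per by (simp add: periodic_in_theta_def)
  next
    case (Suc i)
    have d1: "((\<lambda>s. D i 0 s (\<theta> + 2*pi)) has_real_derivative D (Suc i) 0 t (\<theta> + 2*pi)) (at t within {T..})"
      using sf_dt[OF sf Suc.prems] .
    have d2: "((\<lambda>s. D i 0 s (\<theta> + 2*pi)) has_real_derivative D (Suc i) 0 t \<theta>) (at t within {T..})"
      by (rule has_field_derivative_transform_within[OF sf_dt[OF sf Suc.prems, of i 0 \<theta>], of 1])
         (use Suc in auto)
    show ?case using has_field_derivative_unique[OF d1 d2 nbot_within[OF Suc.prems]] .
  qed
next
  case (Suc j)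
  have d1: "((\<lambda>\<phi>. D i j t (\<phi> + 2*pi)) has_real_derivative D i (Suc j) t (\<theta> + 2*pi)) (at \<theta>)"
    using sf_dth[OF sf Suc.prems, of i j "\<theta> + 2*pi"] DERIV_shift by blast
  have d2: "((\<lambda>\<phi>. D i j t (\<phi> + 2*pi)) has_real_derivative D i (Suc j) t \<theta>) (at \<theta>)"
    using sf_dth[OF sf Suc.prems, of i j \<theta>] Suc.IH[OF Suc.prems] by simp
  show ?case using DERIV_unique[OF d1 d2] .
qed

lemma sf_per_nat:
  assumes sf: "smooth_family T u D" and per: "periodic_in_theta T u" and t: "T \<le> t"
  shows "D i j t (\<theta> + 2*pi*real n) = D i j t \<theta>"
proof (induction n)
  case (Suc n)
  have "D i j t (\<theta> + 2*pi*real (Suc n)) = D i j t ((\<theta> + 2*pi*real n) + 2*pi)"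
    by (simp add: algebra_simps)
  also have "\<dots> = D i j t (\<theta> + 2*pi*real n)" by (rule sf_per[OF sf per t])
  finally show ?case using Suc by simp
qed simp

lemma sf_reduce:
  assumes sf: "smooth_family T u D" and per: "periodic_in_theta T u" and t: "T \<le> t"
  shows "D i j t \<theta> = D i j t (\<theta> - 2*pi * of_int \<lfloor>\<theta>/(2*pi)\<rfloor>)"
proof (cases "\<lfloor>\<theta>/(2*pi)\<rfloor> \<ge> 0")
  case True
  then obtain n where n: "\<lfloor>\<theta>/(2*pi)\<rfloor> = int n" by (metis nonneg_eq_int)
  have e: "\<theta> - 2*pi * of_int \<lfloor>\<theta>/(2*pi)\<rfloor> = \<theta> - 2*pi*real n" by (simp only: n of_int_of_nat_eq)
  have "D i j t ((\<theta> - 2*pi*real n) + 2*pi*real n) = D i j t (\<theta> - 2*pi*real n)"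
    by (rule sf_per_nat[OF sf per t])
  then show ?thesis unfolding e by simp
next
  case False
  have aux: "(k::int) < 0 \<Longrightarrow> k = - int (nat (-k))" for k by simp
  from False have "\<lfloor>\<theta>/(2*pi)\<rfloor> < 0" by (simp only: not_le)
  from aux[OF this] obtain n where n: "\<lfloor>\<theta>/(2*pi)\<rfloor> = - int n" by blast
  have e: "\<theta> - 2*pi * of_int \<lfloor>\<theta>/(2*pi)\<rfloor> = \<theta> + 2*pi*real n" by (simp only: n of_int_minus of_int_of_nat_eq mult_minus_right diff_minus_eq_add)
  show ?thesis unfolding e by (rule sf_per_nat[OF sf per t, symmetric])
qed

lemma reduce_range: "\<theta> - 2*pi * of_int \<lfloor>\<theta>/(2*pi)\<rfloor> \<in> {0..2*pi}"
proof -
  have p: "2*pi > 0" by simp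
  have "of_int \<lfloor>\<theta>/(2*pi)\<rfloor> \<le> \<theta>/(2*pi)" by (rule of_int_floor_le)
  then have "of_int \<lfloor>\<theta>/(2*pi)\<rfloor> * (2*pi) \<le> \<theta>" using p by (simp only: pos_le_divide_eq)
  then have a: "2*pi * of_int \<lfloor>\<theta>/(2*pi)\<rfloor> \<le> \<theta>" by (simp add: mult.commute)
  have "\<theta>/(2*pi) < of_int \<lfloor>\<theta>/(2*pi)\<rfloor> + 1" by linarith
  then have "\<theta> < (of_int \<lfloor>\<theta>/(2*pi)\<rfloor> + 1) * (2*pi)" using p by (simp only: pos_divide_less_eq)
  then have b: "\<theta> < 2*pi * of_int \<lfloor>\<theta>/(2*pi)\<rfloor> + 2*pi" by (simp add: algebra_simps)
  show ?thesis using a b by auto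
qed



locale gw =
  fixes P Q :: "real \<Rightarrow> real \<Rightarrow> real"
    and DP DQ :: "nat \<Rightarrow> nat \<Rightarrow> real \<Rightarrow> real \<Rightarrow> real"
    and \<tau>0 \<gamma> \<alpha> :: real
  assumes smP: "smooth_family \<tau>0 P DP" and smQ: "smooth_family \<tau>0 Q DQ"
    and perP: "periodic_in_theta \<tau>0 P" and perQ: "periodic_in_theta \<tau>0 Q"
    and eqP: "\<And>t \<theta>. \<tau>0 \<le> t \<Longrightarrow>
       DP 2 0 t \<theta> - exp (- 2 * t) * DP 0 2 t \<theta>
       - exp (2 * P t \<theta>) * ((DQ 1 0 t \<theta>)\<^sup>2 - exp (- 2 * t) * (DQ 0 1 t \<theta>)\<^sup>2) = 0"
    and eqQ: "\<And>t \<theta>. \<tau>0 \<le> t \<Longrightarrow>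
       DQ 2 0 t \<theta> - exp (- 2 * t) * DQ 0 2 t \<theta>
       + 2 * (DP 1 0 t \<theta> * DQ 1 0 t \<theta> - exp (- 2 * t) * DP 0 1 t \<theta> * DQ 0 1 t \<theta>) = 0"
    and t0: "\<tau>0 \<ge> 2"
    and gpos: "\<gamma> > 0"
    and Pbd: "\<And>\<theta>. 1 \<le> P \<tau>0 \<theta> \<and> P \<tau>0 \<theta> \<le> \<tau>0 - 1"
    and Pgam: "\<And>\<theta>. \<gamma> \<le> P \<tau>0 \<theta> / \<tau>0 \<and> P \<tau>0 \<theta> / \<tau>0 \<le> 1 - \<gamma>"
    and alpha: "0 < \<alpha>" "\<alpha> < \<gamma>"
    and Fsmall: "Ffun DP DQ \<tau>0 \<le> (\<gamma> - \<alpha>)\<^sup>2"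
begin

lemma exp2: "exp (2 * (x::real)) = (exp x)\<^sup>2" "exp (- 2 * (x::real)) = (exp (- x))\<^sup>2"
  by (simp_all add: power2_eq_square flip: exp_add)

lemma eqP': "\<tau>0 \<le> t \<Longrightarrow> DP 2 0 t \<theta> = (exp (- t))\<^sup>2 * DP 0 2 t \<theta>
   + (exp (DP 0 0 t \<theta>))\<^sup>2 * ((DQ 1 0 t \<theta>)\<^sup>2 - (exp (- t))\<^sup>2 * (DQ 0 1 t \<theta>)\<^sup>2)"
  using eqP[of t \<theta>] sf_eq[OF smP, of t \<theta>] unfolding exp2 by (simp add: algebra_simps)

lemma eqQ': "\<tau>0 \<le> t \<Longrightarrow> DQ 2 0 t \<theta> = (exp (- t))\<^sup>2 * DQ 0 2 t \<theta>
   - 2 * (DP 1 0 t \<theta> * DQ 1 0 t \<theta> - (exp (- t))\<^sup>2 * DP 0 1 t \<theta> * DQ 0 1 t \<theta>)"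
  using eqQ[of t \<theta>] unfolding exp2 by (simp add: algebra_simps)

lemma cP: "\<tau>0 \<le> s \<Longrightarrow> ((\<lambda>s. DP i j s (c + \<sigma> * exp (- s))) has_real_derivative
     (DP (Suc i) j s (c + \<sigma> * exp (- s)) - \<sigma> * exp (- s) * DP i (Suc j) s (c + \<sigma> * exp (- s)))) (at s within {\<tau>0..})"
  by (rule sf_chain[OF smP])
lemma cQ: "\<tau>0 \<le> s \<Longrightarrow> ((\<lambda>s. DQ i j s (c + \<sigma> * exp (- s))) has_real_derivative
     (DQ (Suc i) j s (c + \<sigma> * exp (- s)) - \<sigma> * exp (- s) * DQ i (Suc j) s (c + \<sigma> * exp (- s)))) (at s within {\<tau>0..})"
  by (rule sf_chain[OF smQ])

definition "Ap t \<theta> = DP 1 0 t \<theta> + exp (- t) * DP 0 1 t \<theta> - DP 0 0 t \<theta> / t"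
definition "Am t \<theta> = DP 1 0 t \<theta> - exp (- t) * DP 0 1 t \<theta> - DP 0 0 t \<theta> / t"
definition "xp t \<theta> = exp (DP 0 0 t \<theta>) * (DQ 1 0 t \<theta> + exp (- t) * DQ 0 1 t \<theta>)"
definition "xm t \<theta> = exp (DP 0 0 t \<theta>) * (DQ 1 0 t \<theta> - exp (- t) * DQ 0 1 t \<theta>)"
definition "Fp t \<theta> = (Ap t \<theta>)\<^sup>2 + (xp t \<theta>)\<^sup>2"
definition "Fm t \<theta> = (Am t \<theta>)\<^sup>2 + (xm t \<theta>)\<^sup>2"

lemma alg_char:
  fixes pA pB pC pD pE pF qB qC qD qE qF e E s \<sigma> :: real
  assumes pF: "pF = e\<^sup>2 * pE + E\<^sup>2 * (qB\<^sup>2 - e\<^sup>2 * qC\<^sup>2)"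
    and qF: "qF = e\<^sup>2 * qE - 2 * (pB * qB - e\<^sup>2 * pC * qC)"
    and s: "s \<noteq> 0" and sig: "\<sigma> = 1 \<or> \<sigma> = -1"
  defines "dP00 \<equiv> pB - \<sigma> * e * pC" and "dP10 \<equiv> pF - \<sigma> * e * pD"
    and "dP01 \<equiv> pD - \<sigma> * e * pE" and "dQ10 \<equiv> qF - \<sigma> * e * qD" and "dQ01 \<equiv> qD - \<sigma> * e * qE"
  defines "A \<equiv> pB + \<sigma> * e * pC - pA / s" and "A' \<equiv> pB - \<sigma> * e * pC - pA / s"
    and "x \<equiv> E * (qB + \<sigma> * e * qC)" and "x' \<equiv> E * (qB - \<sigma> * e * qC)"
  shows "2 * A * (dP10 + (- \<sigma> * e * pC + \<sigma> * e * dP01) - (dP00 / s - pA / s\<^sup>2))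
       + 2 * x * (E * dP00 * (qB + \<sigma> * e * qC) + E * (dQ10 - \<sigma> * e * qC + \<sigma> * e * dQ01))
       = - (A\<^sup>2 + x\<^sup>2) + (1 - 2 / s) * A * A' + (1 - 2 * pA / s) * x * x'"
    and "2 * x * (E * dP00 * (qB + \<sigma> * e * qC) + E * (dQ10 - \<sigma> * e * qC + \<sigma> * e * dQ01))
       = - x\<^sup>2 + (1 - 2 * (pB + \<sigma> * e * pC)) * x * x'"
proof -
  have s2: "\<sigma>\<^sup>2 = 1" using sig by auto
  show "2 * A * (dP10 + (- \<sigma> * e * pC + \<sigma> * e * dP01) - (dP00 / s - pA / s\<^sup>2))
       + 2 * x * (E * dP00 * (qB + \<sigma> * e * qC) + E * (dQ10 - \<sigma> * e * qC + \<sigma> * e * dQ01))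
       = - (A\<^sup>2 + x\<^sup>2) + (1 - 2 / s) * A * A' + (1 - 2 * pA / s) * x * x'"
    unfolding dP00_def dP10_def dP01_def dQ10_def dQ01_def A_def A'_def x_def x'_def pF qF
    using s s2 by (simp add: field_simps power2_eq_square) algebra
  show "2 * x * (E * dP00 * (qB + \<sigma> * e * qC) + E * (dQ10 - \<sigma> * e * qC + \<sigma> * e * dQ01))
       = - x\<^sup>2 + (1 - 2 * (pB + \<sigma> * e * pC)) * x * x'"
    unfolding dP00_def dP10_def dP01_def dQ10_def dQ01_def A_def A'_def x_def x'_def pF qF
    using s2 by (simp add: field_simps power2_eq_square) algebra
qed

lemma char_deriv:
  fixes c \<sigma> s :: real
  assumes s: "\<tau>0 \<le> s" and sig: "\<sigma> = 1 \<or> \<sigma> = -1"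
  defines "\<theta> \<equiv> \<lambda>s. c + \<sigma> * exp (- s)"
  defines "A \<equiv> \<lambda>s. DP 1 0 s (\<theta> s) + \<sigma> * exp (- s) * DP 0 1 s (\<theta> s) - DP 0 0 s (\<theta> s) / s"
    and "A' \<equiv> \<lambda>s. DP 1 0 s (\<theta> s) - \<sigma> * exp (- s) * DP 0 1 s (\<theta> s) - DP 0 0 s (\<theta> s) / s"
    and "x \<equiv> \<lambda>s. exp (DP 0 0 s (\<theta> s)) * (DQ 1 0 s (\<theta> s) + \<sigma> * exp (- s) * DQ 0 1 s (\<theta> s))"
    and "x' \<equiv> \<lambda>s. exp (DP 0 0 s (\<theta> s)) * (DQ 1 0 s (\<theta> s) - \<sigma> * exp (- s) * DQ 0 1 s (\<theta> s))"
  shows "((\<lambda>s. (A s)\<^sup>2 + (x s)\<^sup>2) has_real_derivative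
           (- ((A s)\<^sup>2 + (x s)\<^sup>2) + (1 - 2 / s) * A s * A' s + (1 - 2 * DP 0 0 s (\<theta> s) / s) * x s * x' s)) (at s within {\<tau>0..})"
    and "((\<lambda>s. (x s)\<^sup>2) has_real_derivative
           (- (x s)\<^sup>2 + (1 - 2 * (DP 1 0 s (\<theta> s) + \<sigma> * exp (- s) * DP 0 1 s (\<theta> s))) * x s * x' s)) (at s within {\<tau>0..})"
proof -
  have s0: "s \<noteq> 0" using s t0 by auto
  let ?e = "exp (- s)" and ?E = "exp (DP 0 0 s (\<theta> s))"
  let ?d = "\<lambda>D i j. D (Suc i) j s (\<theta> s) - \<sigma> * exp (- s) * D i (Suc j) s (\<theta> s)"
  have dA: "(A has_real_derivative (?d DP 1 0 + (- \<sigma> * ?e * DP 0 1 s (\<theta> s) + \<sigma> * ?e * ?d DP 0 1)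
        - (?d DP 0 0 / s - DP 0 0 s (\<theta> s) / s\<^sup>2))) (at s within {\<tau>0..})"
    unfolding A_def \<theta>_def using s s0
    by (auto intro!: derivative_eq_intros cP simp: field_simps power2_eq_square)
  have dx: "(x has_real_derivative (?E * ?d DP 0 0 * (DQ 1 0 s (\<theta> s) + \<sigma> * ?e * DQ 0 1 s (\<theta> s))
        + ?E * (?d DQ 1 0 - \<sigma> * ?e * DQ 0 1 s (\<theta> s) + \<sigma> * ?e * ?d DQ 0 1))) (at s within {\<tau>0..})"
    unfolding x_def \<theta>_def using s s0
    by (auto intro!: derivative_eq_intros cP cQ simp: field_simps power2_eq_square)
  note alg1 = alg_char(1)[where pA="DP 0 0 s (\<theta> s)" and pD="DP 1 1 s (\<theta> s)" and qD="DQ 1 1 s (\<theta> s)",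
     OF eqP'[OF s, of "\<theta> s"] eqQ'[OF s, of "\<theta> s"] s0 sig]
  note alg2 = alg_char(2)[where qD="DQ 1 1 s (\<theta> s)",
     OF eqP'[OF s, of "\<theta> s"] eqQ'[OF s, of "\<theta> s"] s0 sig]
  have "((\<lambda>s. (A s)\<^sup>2 + (x s)\<^sup>2) has_real_derivative
      (2 * A s * (?d DP 1 0 + (- \<sigma> * ?e * DP 0 1 s (\<theta> s) + \<sigma> * ?e * ?d DP 0 1)
        - (?d DP 0 0 / s - DP 0 0 s (\<theta> s) / s\<^sup>2))
      + 2 * x s * (?E * ?d DP 0 0 * (DQ 1 0 s (\<theta> s) + \<sigma> * ?e * DQ 0 1 s (\<theta> s))
        + ?E * (?d DQ 1 0 - \<sigma> * ?e * DQ 0 1 s (\<theta> s) + \<sigma> * ?e * ?d DQ 0 1)))) (at s within {\<tau>0..})"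
    by (auto intro!: derivative_eq_intros dA dx)
  then show "((\<lambda>s. (A s)\<^sup>2 + (x s)\<^sup>2) has_real_derivative
           (- ((A s)\<^sup>2 + (x s)\<^sup>2) + (1 - 2 / s) * A s * A' s + (1 - 2 * DP 0 0 s (\<theta> s) / s) * x s * x' s)) (at s within {\<tau>0..})"
    using alg1 unfolding A_def A'_def x_def x'_def by (simp add: numeral_2_eq_2)
  have "((\<lambda>s. (x s)\<^sup>2) has_real_derivative
      (2 * x s * (?E * ?d DP 0 0 * (DQ 1 0 s (\<theta> s) + \<sigma> * ?e * DQ 0 1 s (\<theta> s))
        + ?E * (?d DQ 1 0 - \<sigma> * ?e * DQ 0 1 s (\<theta> s) + \<sigma> * ?e * ?d DQ 0 1)))) (at s within {\<tau>0..})"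
    by (auto intro!: derivative_eq_intros dx)
  then show "((\<lambda>s. (x s)\<^sup>2) has_real_derivative
           (- (x s)\<^sup>2 + (1 - 2 * (DP 1 0 s (\<theta> s) + \<sigma> * exp (- s) * DP 0 1 s (\<theta> s))) * x s * x' s)) (at s within {\<tau>0..})"
    using alg2 unfolding A_def A'_def x_def x'_def by (simp add: numeral_2_eq_2)
qed

end


context gw begin

lemma contP: "continuous_on ({\<tau>0..} \<times> UNIV) (\<lambda>z. DP i j (fst z) (snd z))"
  using sf_cont[OF smP, of i j] by (simp add: split_beta)
lemma contQ: "continuous_on ({\<tau>0..} \<times> UNIV) (\<lambda>z. DQ i j (fst z) (snd z))"
  using sf_cont[OF smQ, of i j] by (simp add: split_beta)

lemma contP_th: "\<tau>0 \<le> t \<Longrightarrow> continuous_on S (\<lambda>\<theta>. DP i j t \<theta>)"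
  by (rule continuous_at_imp_continuous_on) (metis DERIV_isCont sf_dth[OF smP])
lemma contQ_th: "\<tau>0 \<le> t \<Longrightarrow> continuous_on S (\<lambda>\<theta>. DQ i j t \<theta>)"
  by (rule continuous_at_imp_continuous_on) (metis DERIV_isCont sf_dth[OF smQ])

lemma contP_t: "continuous_on {\<tau>0..} (\<lambda>s. DP i j s \<theta>)"
proof -
  have "continuous_on {\<tau>0..} (\<lambda>s. (\<lambda>z. DP i j (fst z) (snd z)) (s, \<theta>))"
    by (rule continuous_on_compose2[OF contP]) (auto intro!: continuous_intros)
  then show ?thesis by simp
qed

lemma Fp_cont: "continuous_on ({\<tau>0..} \<times> UNIV) (\<lambda>(t, \<theta>). Fp t \<theta>)"
  and Fm_cont: "continuous_on ({\<tau>0..} \<times> UNIV) (\<lambda>(t, \<theta>). Fm t \<theta>)"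
  and xp_cont: "continuous_on ({\<tau>0..} \<times> UNIV) (\<lambda>(t, \<theta>). (xp t \<theta>)\<^sup>2)"
  and xm_cont: "continuous_on ({\<tau>0..} \<times> UNIV) (\<lambda>(t, \<theta>). (xm t \<theta>)\<^sup>2)"
  unfolding Fp_def Fm_def Ap_def Am_def xp_def xm_def split_beta
  using t0 by (auto intro!: continuous_intros contP contQ)

definition red :: "real \<Rightarrow> real" where "red \<theta> = \<theta> - 2*pi * of_int \<lfloor>\<theta>/(2*pi)\<rfloor>"

lemma red_range: "red \<theta> \<in> {0..2*pi}" unfolding red_def by (rule reduce_range)
lemma redP: "\<tau>0 \<le> t \<Longrightarrow> DP i j t \<theta> = DP i j t (red \<theta>)"
  unfolding red_def by (rule sf_reduce[OF smP perP])
lemma redQ: "\<tau>0 \<le> t \<Longrightarrow> DQ i j t \<theta> = DQ i j t (red \<theta>)"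
  unfolding red_def by (rule sf_reduce[OF smQ perQ])

lemma red_all:
  assumes "\<tau>0 \<le> t"
  shows "Fp t \<theta> = Fp t (red \<theta>)" "Fm t \<theta> = Fm t (red \<theta>)"
    "xp t \<theta> = xp t (red \<theta>)" "xm t \<theta> = xm t (red \<theta>)"
proof -
  note e = redP[OF assms, of _ _ \<theta>] redQ[OF assms, of _ _ \<theta>]
  show "Fp t \<theta> = Fp t (red \<theta>)" unfolding Fp_def Ap_def xp_def by (simp only: e)
  show "Fm t \<theta> = Fm t (red \<theta>)" unfolding Fm_def Am_def xm_def by (simp only: e)
  show "xp t \<theta> = xp t (red \<theta>)" unfolding xp_def by (simp only: e)
  show "xm t \<theta> = xm t (red \<theta>)" unfolding xm_def by (simp only: e)
qed

lemma sup_le: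
  fixes f :: "real \<Rightarrow> real"
  assumes "continuous_on {0..2*pi} f" "x \<in> {0..2*pi}"
  shows "f x \<le> (SUP \<theta>\<in>{0..2*pi}. f \<theta>)"
proof (rule cSUP_upper[OF assms(2)])
  have "compact (f ` {0..2*pi})" by (rule compact_continuous_image[OF assms(1)]) simp
  then show "bdd_above (f ` {0..2*pi})" by (rule bounded_imp_bdd_above[OF compact_imp_bounded])
qed

lemma init_F: "Fp \<tau>0 \<theta> + Fm \<tau>0 \<theta>' \<le> 2 * (\<gamma> - \<alpha>)\<^sup>2"
proof -
  have t: "\<tau>0 \<le> \<tau>0" by simp
  let ?f1 = "\<lambda>\<theta>. (DP 1 0 \<tau>0 \<theta> - DP 0 0 \<tau>0 \<theta> / \<tau>0 + exp (- \<tau>0) * DP 0 1 \<tau>0 \<theta>)\<^sup>2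
              + exp (2 * DP 0 0 \<tau>0 \<theta>) * (DQ 1 0 \<tau>0 \<theta> + exp (- \<tau>0) * DQ 0 1 \<tau>0 \<theta>)\<^sup>2"
  let ?f2 = "\<lambda>\<theta>. (DP 1 0 \<tau>0 \<theta> - DP 0 0 \<tau>0 \<theta> / \<tau>0 - exp (- \<tau>0) * DP 0 1 \<tau>0 \<theta>)\<^sup>2
              + exp (2 * DP 0 0 \<tau>0 \<theta>) * (DQ 1 0 \<tau>0 \<theta> - exp (- \<tau>0) * DQ 0 1 \<tau>0 \<theta>)\<^sup>2"
  have tne: "\<tau>0 \<noteq> 0" using t0 by auto
  have c1: "continuous_on {0..2*pi} ?f1" using tne by (intro continuous_intros contP_th contQ_th t) auto
  have c2: "continuous_on {0..2*pi} ?f2" using tne by (intro continuous_intros contP_th contQ_th t) auto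
  have e1: "Fp \<tau>0 x = ?f1 x" for x
    unfolding Fp_def Ap_def xp_def exp2 by (simp add: power2_eq_square algebra_simps)
  have e2: "Fm \<tau>0 x = ?f2 x" for x
    unfolding Fm_def Am_def xm_def exp2 by (simp add: power2_eq_square algebra_simps)
  have "Fp \<tau>0 \<theta> + Fm \<tau>0 \<theta>' = ?f1 (red \<theta>) + ?f2 (red \<theta>')"
    using red_all[OF t] e1 e2 by simp
  also have "\<dots> \<le> (SUP \<theta>\<in>{0..2*pi}. ?f1 \<theta>) + (SUP \<theta>\<in>{0..2*pi}. ?f2 \<theta>)"
    by (intro add_mono sup_le c1 c2 red_range)
  also have "\<dots> = 2 * Ffun DP DQ \<tau>0" unfolding Ffun_def by simp
  also have "\<dots> \<le> 2 * (\<gamma> - \<alpha>)\<^sup>2" using Fsmall by simp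
  finally show ?thesis .
qed

end


lemma key_ineq:
  fixes l c A B x y :: real
  assumes "0 \<le> l" "\<bar>c\<bar> \<le> l"
  shows "l * A * B + c * x * y \<le> l * ((A\<^sup>2 + x\<^sup>2) + (B\<^sup>2 + y\<^sup>2)) / 2"
proof -
  have "A * B \<le> (A\<^sup>2 + B\<^sup>2) / 2" using sum_squares_ge_zero[of "A - B" 0]
    by (simp add: power2_eq_square algebra_simps)
  then have 1: "l * (A * B) \<le> l * ((A\<^sup>2 + B\<^sup>2) / 2)" by (rule mult_left_mono) (use assms in auto)
  have "\<bar>x * y\<bar> \<le> (x\<^sup>2 + y\<^sup>2) / 2" using sum_squares_ge_zero[of "\<bar>x\<bar> - \<bar>y\<bar>" 0]
    by (simp add: power2_eq_square algebra_simps abs_mult)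
  moreover have "c * (x * y) \<le> \<bar>c\<bar> * \<bar>x * y\<bar>" by (simp add: abs_mult[symmetric])
  moreover have "\<bar>c\<bar> * \<bar>x * y\<bar> \<le> l * \<bar>x * y\<bar>" by (rule mult_right_mono) (use assms in auto)
  moreover have "l * \<bar>x * y\<bar> \<le> l * ((x\<^sup>2 + y\<^sup>2) / 2)" by (rule mult_left_mono) (use assms calculation in auto)
  ultimately have 2: "c * (x * y) \<le> l * ((x\<^sup>2 + y\<^sup>2) / 2)" by linarith
  show ?thesis using 1 2 by (simp add: algebra_simps add_divide_distrib)
qed

context gw begin

definition "\<delta> = \<gamma> - \<alpha>"
definition "\<eta> = \<alpha> / 4"
definition "\<sigma>0 = \<delta> + \<eta> / 2"
definition "\<nu> = \<sigma>0 / (\<delta> + \<eta>)"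
definition "m = \<gamma> - (\<delta> + \<eta>)"
definition "w s = exp (- \<nu> * ln (s / \<tau>0))"
definition "B1 s = 2 * \<sigma>0\<^sup>2 * (w s)\<^sup>2"

lemma cst: "\<delta> > 0" "\<eta> > 0" "\<sigma>0 > \<delta>" "0 < \<nu>" "\<nu> < 1" "m > 0" "(\<delta> + \<eta>) * \<nu> = \<sigma>0" "\<sigma>0 \<le> \<delta> + \<eta>"
  "m = 3 * \<alpha> / 4"
  using alpha unfolding \<delta>_def \<eta>_def \<sigma>0_def \<nu>_def m_def by (auto simp: field_simps)

lemma w_pos: "w s > 0" unfolding w_def by simp
lemma w_le1: "\<tau>0 \<le> s \<Longrightarrow> w s \<le> 1"
proof -
  assume s: "\<tau>0 \<le> s"
  then have "ln (s / \<tau>0) \<ge> 0" using t0 by simp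
  then show ?thesis unfolding w_def using cst(4) by (simp add: mult_nonneg_nonneg)
qed
lemma w_t0: "w \<tau>0 = 1" unfolding w_def using t0 by simp

lemma w_deriv: "0 < s \<Longrightarrow> (w has_real_derivative (- \<nu> / s * w s)) (at s within S)"
  unfolding w_def using t0
  by (auto intro!: derivative_eq_intros simp: field_simps)

lemma B1_deriv: "0 < s \<Longrightarrow> (B1 has_real_derivative (- 2 * \<nu> / s * B1 s)) (at s within S)"
  unfolding B1_def
  by (rule derivative_eq_intros w_deriv refl | assumption | simp add: field_simps power2_eq_square)+

lemma B1_cont: "continuous_on {\<tau>0..} B1"
  by (rule DERIV_continuous_on[OF B1_deriv]) (use t0 in auto)

lemma B1_pos: "B1 s > 0" unfolding B1_def using cst w_pos[of s] by simp

lemma hbound: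
  assumes "Fp s \<theta> + Fm s \<theta> \<le> B1 s"
  shows "\<bar>(Ap s \<theta> + Am s \<theta>) / 2\<bar> \<le> \<sigma>0 * w s"
proof -
  have "((Ap s \<theta> + Am s \<theta>) / 2)\<^sup>2 \<le> ((Ap s \<theta>)\<^sup>2 + (Am s \<theta>)\<^sup>2) / 2"
    using sum_squares_ge_zero[of "Ap s \<theta> - Am s \<theta>" 0] by (simp add: power2_eq_square field_simps)
  also have "\<dots> \<le> (Fp s \<theta> + Fm s \<theta>) / 2" unfolding Fp_def Fm_def by simp
  also have "\<dots> \<le> B1 s / 2" using assms by simp
  also have "\<dots> = (\<sigma>0 * w s)\<^sup>2" unfolding B1_def by (simp add: power_mult_distrib)
  finally have "((Ap s \<theta> + Am s \<theta>) / 2)\<^sup>2 \<le> (\<sigma>0 * w s)\<^sup>2" .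
  then have "\<bar>(Ap s \<theta> + Am s \<theta>) / 2\<bar> \<le> \<bar>\<sigma>0 * w s\<bar>" by (simp only: abs_le_square_iff)
  then show ?thesis using cst w_pos[of s] by simp
qed

lemma ApAm: "0 < s \<Longrightarrow> DP 1 0 s \<theta> = DP 0 0 s \<theta> / s + (Ap s \<theta> + Am s \<theta>) / 2"
  unfolding Ap_def Am_def by (simp add: field_simps)

lemma drift:
  assumes G: "\<And>s \<theta>. \<tau>0 \<le> s \<Longrightarrow> s \<le> \<tau> \<Longrightarrow> Fp s \<theta> + Fm s \<theta> \<le> B1 s"
    and s: "\<tau>0 \<le> s" "s \<le> \<tau>"
  shows "m + (\<delta> + \<eta>) * w s \<le> DP 0 0 s \<theta> / s" "DP 0 0 s \<theta> / s \<le> 1 - m - (\<delta> + \<eta>) * w s"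
    "m \<le> DP 1 0 s \<theta>" "DP 1 0 s \<theta> \<le> 1 - m"
proof -
  have pos: "0 < u" if "\<tau>0 \<le> u" for u using that t0 by auto
  have hb: "\<bar>(Ap u \<theta> + Am u \<theta>) / 2\<bar> \<le> \<sigma>0 * w u" if "\<tau>0 \<le> u" "u \<le> \<tau>" for u
    by (rule hbound[OF G[OF that]])
  have dq: "((\<lambda>u. DP 0 0 u \<theta> / u + k * w u) has_real_derivative
      ((DP 1 0 u \<theta> - DP 0 0 u \<theta> / u) / u - k * \<nu> / u * w u)) (at u within {\<tau>0..})" if "\<tau>0 \<le> u" for u k
    using pos[OF that] that
    by (auto intro!: derivative_eq_intros sf_dt[OF smP] w_deriv simp: field_simps)
  have init: "\<gamma> \<le> DP 0 0 \<tau>0 \<theta> / \<tau>0" "DP 0 0 \<tau>0 \<theta> / \<tau>0 \<le> 1 - \<gamma>"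
    using Pgam[of \<theta>] sf_eq[OF smP, of \<tau>0 \<theta>] by auto
  have "DP 0 0 \<tau>0 \<theta> / \<tau>0 + (- (\<delta> + \<eta>)) * w \<tau>0 \<le> DP 0 0 s \<theta> / s + (- (\<delta> + \<eta>)) * w s"
  proof (rule mono_from_deriv[OF dq _ s(1)])
    fix u assume u: "\<tau>0 \<le> u" "u \<le> s"
    have "(DP 1 0 u \<theta> - DP 0 0 u \<theta> / u) = (Ap u \<theta> + Am u \<theta>) / 2" using ApAm[OF pos[OF u(1)]] by simp
    moreover have "\<bar>(Ap u \<theta> + Am u \<theta>) / 2\<bar> \<le> \<sigma>0 * w u" using hb u s by simp
    ultimately have "0 \<le> (DP 1 0 u \<theta> - DP 0 0 u \<theta> / u) + \<sigma>0 * w u" unfolding abs_le_iff by linarith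
    then have "0 \<le> ((DP 1 0 u \<theta> - DP 0 0 u \<theta> / u) + \<sigma>0 * w u) / u" using pos[OF u(1)] by simp
    moreover have "(DP 1 0 u \<theta> - DP 0 0 u \<theta> / u) / u - - (\<delta> + \<eta>) * \<nu> / u * w u
        = ((DP 1 0 u \<theta> - DP 0 0 u \<theta> / u) + \<sigma>0 * w u) / u"
      using pos[OF u(1)] by (simp add: field_simps cst(7)[symmetric])
    ultimately show "0 \<le> (DP 1 0 u \<theta> - DP 0 0 u \<theta> / u) / u - - (\<delta> + \<eta>) * \<nu> / u * w u"
      by simp
  qed
  moreover have "(- (\<delta> + \<eta>)) * w s = - ((\<delta> + \<eta>) * w s)" by (simp add: algebra_simps)
  moreover have "(- (\<delta> + \<eta>)) * w \<tau>0 = - (\<delta> + \<eta>)" by (simp add: w_t0)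
  ultimately show l1: "m + (\<delta> + \<eta>) * w s \<le> DP 0 0 s \<theta> / s" using init w_t0 unfolding m_def by linarith
  have "DP 0 0 s \<theta> / s + (\<delta> + \<eta>) * w s \<le> DP 0 0 \<tau>0 \<theta> / \<tau>0 + (\<delta> + \<eta>) * w \<tau>0"
  proof -
    have "- (DP 0 0 \<tau>0 \<theta> / \<tau>0 + (\<delta> + \<eta>) * w \<tau>0) \<le> - (DP 0 0 s \<theta> / s + (\<delta> + \<eta>) * w s)"
    proof (rule mono_from_deriv[OF DERIV_minus[OF dq] _ s(1)])
      fix u assume u: "\<tau>0 \<le> u" "u \<le> s"
      have "(DP 1 0 u \<theta> - DP 0 0 u \<theta> / u) = (Ap u \<theta> + Am u \<theta>) / 2" using ApAm[OF pos[OF u(1)]] by simp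
      moreover have "\<bar>(Ap u \<theta> + Am u \<theta>) / 2\<bar> \<le> \<sigma>0 * w u" using hb u s by simp
      ultimately have "0 \<le> \<sigma>0 * w u - (DP 1 0 u \<theta> - DP 0 0 u \<theta> / u)" unfolding abs_le_iff by linarith
      then have "0 \<le> (\<sigma>0 * w u - (DP 1 0 u \<theta> - DP 0 0 u \<theta> / u)) / u" using pos[OF u(1)] by simp
      moreover have "- ((DP 1 0 u \<theta> - DP 0 0 u \<theta> / u) / u - (\<delta> + \<eta>) * \<nu> / u * w u)
          = (\<sigma>0 * w u - (DP 1 0 u \<theta> - DP 0 0 u \<theta> / u)) / u"
        using pos[OF u(1)] by (simp add: field_simps cst(7)[symmetric])
      ultimately show "0 \<le> - ((DP 1 0 u \<theta> - DP 0 0 u \<theta> / u) / u - (\<delta> + \<eta>) * \<nu> / u * w u)"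
        by simp
    qed
    then show ?thesis by simp
  qed
  moreover have "(\<delta> + \<eta>) * w \<tau>0 = (\<delta> + \<eta>)" by (simp add: w_t0)
  ultimately show l2: "DP 0 0 s \<theta> / s \<le> 1 - m - (\<delta> + \<eta>) * w s" using init w_t0 unfolding m_def by linarith
  have h: "\<bar>(Ap s \<theta> + Am s \<theta>) / 2\<bar> \<le> \<sigma>0 * w s" using hb s by simp
  have e: "DP 1 0 s \<theta> = DP 0 0 s \<theta> / s + (Ap s \<theta> + Am s \<theta>) / 2" using ApAm[OF pos[OF s(1)]] .
  have "\<sigma>0 * w s \<le> (\<delta> + \<eta>) * w s" using cst(8) w_pos[of s] by (simp add: mult_right_mono)
  then show "m \<le> DP 1 0 s \<theta>" "DP 1 0 s \<theta> \<le> 1 - m" using l1 l2 h e unfolding abs_le_iff by linarith+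
qed

end


context gw begin

lemma Pbounds:
  assumes G: "\<And>s \<theta>. \<tau>0 \<le> s \<Longrightarrow> s \<le> \<tau> \<Longrightarrow> Fp s \<theta> + Fm s \<theta> \<le> B1 s" and t: "\<tau>0 \<le> \<tau>"
  shows "1 \<le> DP 0 0 \<tau> \<theta>" "DP 0 0 \<tau> \<theta> \<le> \<tau> - 1"
proof -
  have pos1: "0 \<le> DP 1 0 u \<theta>" "0 \<le> 1 - DP 1 0 u \<theta>" "0 \<le> DP (Suc 0) 0 u \<theta>" "0 \<le> 1 - DP (Suc 0) 0 u \<theta>" "DP (Suc 0) 0 u \<theta> \<le> 1"
    if "\<tau>0 \<le> u" "u \<le> \<tau>" for u
    using drift(3,4)[OF G that, of \<theta>] cst(6) by (auto simp: One_nat_def)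
  have d1: "((\<lambda>u. DP 0 0 u \<theta>) has_real_derivative DP 1 0 u \<theta>) (at u within {\<tau>0..})" if "\<tau>0 \<le> u" for u
    using sf_dt[OF smP that, of 0 0 \<theta>] by (simp add: One_nat_def)
  have "DP 0 0 \<tau>0 \<theta> \<le> DP 0 0 \<tau> \<theta>"
    by (rule mono_from_deriv[OF d1 _ t]) (auto intro: pos1)
  then show "1 \<le> DP 0 0 \<tau> \<theta>" using Pbd[of \<theta>] sf_eq[OF smP, of \<tau>0 \<theta>] by auto
  have d: "((\<lambda>u. u - DP 0 0 u \<theta>) has_real_derivative 1 - DP 1 0 u \<theta>) (at u within {\<tau>0..})" if "\<tau>0 \<le> u" for u
    using that by (auto intro!: derivative_eq_intros d1)
  have "\<tau>0 - DP 0 0 \<tau>0 \<theta> \<le> \<tau> - DP 0 0 \<tau> \<theta>"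
    by (rule mono_from_deriv[OF d _ t]) (auto intro: pos1)
  then show "DP 0 0 \<tau> \<theta> \<le> \<tau> - 1" using Pbd[of \<theta>] sf_eq[OF smP, of \<tau>0 \<theta>] by auto
qed

lemma Fp_d: "\<tau>0 \<le> s \<Longrightarrow> ((\<lambda>s. Fp s (c + exp (- s))) has_real_derivative
   (- Fp s (c + exp (- s)) + (1 - 2 / s) * Ap s (c + exp (- s)) * Am s (c + exp (- s))
    + (1 - 2 * DP 0 0 s (c + exp (- s)) / s) * xp s (c + exp (- s)) * xm s (c + exp (- s)))) (at s within {\<tau>0..})"
  using char_deriv(1)[of s 1 c] unfolding Fp_def Ap_def Am_def xp_def xm_def by simp

lemma Fm_d: "\<tau>0 \<le> s \<Longrightarrow> ((\<lambda>s. Fm s (c - exp (- s))) has_real_derivative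
   (- Fm s (c - exp (- s)) + (1 - 2 / s) * Am s (c - exp (- s)) * Ap s (c - exp (- s))
    + (1 - 2 * DP 0 0 s (c - exp (- s)) / s) * xm s (c - exp (- s)) * xp s (c - exp (- s)))) (at s within {\<tau>0..})"
  using char_deriv(1)[of s "-1" c] unfolding Fm_def Ap_def Am_def xp_def xm_def by simp

lemma xp_d: "\<tau>0 \<le> s \<Longrightarrow> ((\<lambda>s. (xp s (c + exp (- s)))\<^sup>2) has_real_derivative
   (- (xp s (c + exp (- s)))\<^sup>2 + (1 - 2 * (DP 1 0 s (c + exp (- s)) + exp (- s) * DP 0 1 s (c + exp (- s))))
      * xp s (c + exp (- s)) * xm s (c + exp (- s)))) (at s within {\<tau>0..})"
  using char_deriv(2)[of s 1 c] unfolding xp_def xm_def by simp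

lemma xm_d: "\<tau>0 \<le> s \<Longrightarrow> ((\<lambda>s. (xm s (c - exp (- s)))\<^sup>2) has_real_derivative
   (- (xm s (c - exp (- s)))\<^sup>2 + (1 - 2 * (DP 1 0 s (c - exp (- s)) - exp (- s) * DP 0 1 s (c - exp (- s))))
      * xm s (c - exp (- s)) * xp s (c - exp (- s)))) (at s within {\<tau>0..})"
  using char_deriv(2)[of s "-1" c] unfolding xp_def xm_def by simp

end


context gw begin

lemma abs_coef:
  fixes p \<tau> :: real
  assumes "1 \<le> p" "p \<le> \<tau> - 1" "2 \<le> \<tau>"
  shows "\<bar>1 - 2 * p / \<tau>\<bar> \<le> 1 - 2 / \<tau>"
proof -
  have tp: "\<tau> > 0" using assms by auto
  have "2 / \<tau> \<le> 2 * p / \<tau>" using assms tp by (simp add: divide_right_mono)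
  moreover have "2 * p / \<tau> \<le> 2 * (\<tau> - 1) / \<tau>" using assms tp by (simp add: divide_right_mono)
  moreover have "2 * (\<tau> - 1) / \<tau> = 2 - 2 / \<tau>" using tp by (simp add: field_simps)
  ultimately show ?thesis by (simp add: abs_le_iff)
qed

lemma step1: assumes "\<tau>0 \<le> t" shows "Fp t \<theta> + Fm t \<theta>' < B1 t"
proof (rule barrier[OF Fp_cont Fm_cont B1_cont _ _ _ _ assms])
  show "\<exists>\<theta>0\<in>{0..2 * pi}. Fp t \<theta> = Fp t \<theta>0" if "\<tau>0 \<le> t" for t \<theta>
    using red_all[OF that] red_range by blast
  show "\<exists>\<theta>0\<in>{0..2 * pi}. Fm t \<theta> = Fm t \<theta>0" if "\<tau>0 \<le> t" for t \<theta>
    using red_all[OF that] red_range by blast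
  show "Fp \<tau>0 \<theta> + Fm \<tau>0 \<theta>' < B1 \<tau>0" for \<theta> \<theta>'
  proof -
    have "(\<gamma> - \<alpha>)\<^sup>2 < \<sigma>0\<^sup>2" using cst(1,3) unfolding \<delta>_def by (simp add: power_strict_mono)
    then show ?thesis using init_F[of \<theta> \<theta>'] unfolding B1_def w_t0 by simp
  qed
next
  fix \<tau>1 \<theta>1 \<theta>1'
  assume Tl: "\<tau>0 < \<tau>1"
    and strict: "\<And>s \<theta> \<theta>'. \<tau>0 \<le> s \<Longrightarrow> s < \<tau>1 \<Longrightarrow> Fp s \<theta> + Fm s \<theta>' < B1 s"
    and le: "\<And>\<theta> \<theta>'. Fp \<tau>1 \<theta> + Fm \<tau>1 \<theta>' \<le> B1 \<tau>1"
    and eq: "Fp \<tau>1 \<theta>1 + Fm \<tau>1 \<theta>1' = B1 \<tau>1"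
  have G: "Fp s \<theta> + Fm s \<theta> \<le> B1 s" if "\<tau>0 \<le> s" "s \<le> \<tau>1" for s \<theta>
  proof (cases "s < \<tau>1")
    case True then show ?thesis using strict[OF that(1) True, of \<theta> \<theta>] by simp
  next
    case False then have "s = \<tau>1" using that by simp
    then show ?thesis using le by simp
  qed
  have t1: "\<tau>0 \<le> \<tau>1" "2 \<le> \<tau>1" "0 < \<tau>1" using Tl t0 by auto
  define c1 where "c1 = \<theta>1 - exp (- \<tau>1)"
  define c2 where "c2 = \<theta>1' + exp (- \<tau>1)"
  have c1e: "c1 + exp (- \<tau>1) = \<theta>1" and c2e: "c2 - exp (- \<tau>1) = \<theta>1'" by (simp_all add: c1_def c2_def)
  define \<phi> where "\<phi> s = Fp s (c1 + exp (- s)) + Fm s (c2 - exp (- s)) - B1 s" for s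
  define l where "l = 1 - 2 / \<tau>1"
  define d where "d = (- Fp \<tau>1 \<theta>1 + l * Ap \<tau>1 \<theta>1 * Am \<tau>1 \<theta>1
    + (1 - 2 * DP 0 0 \<tau>1 \<theta>1 / \<tau>1) * xp \<tau>1 \<theta>1 * xm \<tau>1 \<theta>1)
    + (- Fm \<tau>1 \<theta>1' + l * Am \<tau>1 \<theta>1' * Ap \<tau>1 \<theta>1'
    + (1 - 2 * DP 0 0 \<tau>1 \<theta>1' / \<tau>1) * xm \<tau>1 \<theta>1' * xp \<tau>1 \<theta>1')
    - (- 2 * \<nu> / \<tau>1 * B1 \<tau>1)"
  have dphi: "(\<phi> has_real_derivative d) (at \<tau>1 within {\<tau>0..})"
    unfolding \<phi>_def d_def l_def
    using DERIV_diff[OF DERIV_add[OF Fp_d[OF t1(1), of c1] Fm_d[OF t1(1), of c2]] B1_deriv[OF t1(3)]]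
    unfolding c1e c2e .
  have "d \<ge> 0"
  proof (rule touch_deriv[OF Tl dphi])
    show "\<phi> s < 0" if "\<tau>0 \<le> s" "s < \<tau>1" for s
      using strict[OF that] unfolding \<phi>_def by simp
    show "\<phi> \<tau>1 = 0" unfolding \<phi>_def c1e c2e using eq by simp
  qed
  moreover have "d < 0"
  proof -
    have l0: "0 \<le> l" using t1 by (simp add: l_def)
    have a1: "\<bar>1 - 2 * DP 0 0 \<tau>1 \<theta>1 / \<tau>1\<bar> \<le> l" unfolding l_def
      by (rule abs_coef) (use Pbounds[OF G t1(1)] t1 in auto)
    have a2: "\<bar>1 - 2 * DP 0 0 \<tau>1 \<theta>1' / \<tau>1\<bar> \<le> l" unfolding l_def
      by (rule abs_coef) (use Pbounds[OF G t1(1)] t1 in auto)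
    have k1: "l * Ap \<tau>1 \<theta>1 * Am \<tau>1 \<theta>1 + (1 - 2 * DP 0 0 \<tau>1 \<theta>1 / \<tau>1) * xp \<tau>1 \<theta>1 * xm \<tau>1 \<theta>1
        \<le> l * (Fp \<tau>1 \<theta>1 + Fm \<tau>1 \<theta>1) / 2"
      using key_ineq[OF l0 a1] unfolding Fp_def Fm_def .
    have k2: "l * Am \<tau>1 \<theta>1' * Ap \<tau>1 \<theta>1' + (1 - 2 * DP 0 0 \<tau>1 \<theta>1' / \<tau>1) * xm \<tau>1 \<theta>1' * xp \<tau>1 \<theta>1'
        \<le> l * (Fm \<tau>1 \<theta>1' + Fp \<tau>1 \<theta>1') / 2"
      using key_ineq[OF l0 a2] unfolding Fp_def Fm_def .
    have "l * (Fp \<tau>1 \<theta>1 + Fm \<tau>1 \<theta>1) \<le> l * B1 \<tau>1" using G[OF t1(1) order.refl] l0 by (rule mult_left_mono)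
    moreover have "l * (Fm \<tau>1 \<theta>1' + Fp \<tau>1 \<theta>1') \<le> l * B1 \<tau>1"
      using G[OF t1(1) order.refl, of \<theta>1'] l0 by (simp add: mult_left_mono add.commute)
    moreover have "l * B1 \<tau>1 = B1 \<tau>1 - 2 / \<tau>1 * B1 \<tau>1" by (simp add: l_def algebra_simps)
    moreover have "2 * \<nu> / \<tau>1 * B1 \<tau>1 < 2 / \<tau>1 * B1 \<tau>1"
      using cst(5) B1_pos[of \<tau>1] t1 by (simp add: divide_strict_right_mono)
    ultimately show ?thesis using k1 k2 eq unfolding d_def by (simp add: field_simps)
  qed
  ultimately show False by simp
qed

end


context gw begin

lemma Gall: "\<tau>0 \<le> t \<Longrightarrow> Fp t \<theta> + Fm t \<theta>' \<le> B1 t"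
  using step1 less_imp_le by blast

lemma drift_all:
  assumes "\<tau>0 \<le> s"
  shows "m \<le> DP 0 0 s \<theta> / s" "DP 0 0 s \<theta> / s \<le> 1 - m" "m \<le> DP 1 0 s \<theta>" "DP 1 0 s \<theta> \<le> 1 - m"
proof -
  have G: "\<And>u \<theta>. \<tau>0 \<le> u \<Longrightarrow> u \<le> s \<Longrightarrow> Fp u \<theta> + Fm u \<theta> \<le> B1 u" using Gall by blast
  have "0 \<le> (\<delta> + \<eta>) * w s" using cst w_pos[of s] by simp
  then show "m \<le> DP 0 0 s \<theta> / s" "DP 0 0 s \<theta> / s \<le> 1 - m"
    using drift(1,2)[OF G assms order.refl, of \<theta>] by linarith+
  show "m \<le> DP 1 0 s \<theta>" "DP 1 0 s \<theta> \<le> 1 - m" using drift(3,4)[OF G assms order.refl] by auto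
qed

lemma B1_le: "\<tau>0 \<le> s \<Longrightarrow> B1 s \<le> 2 * \<sigma>0\<^sup>2"
proof -
  assume s: "\<tau>0 \<le> s"
  have "(w s)\<^sup>2 \<le> 1" using w_le1[OF s] w_pos[of s] by (simp add: power_le_one)
  then show ?thesis unfolding B1_def by (simp add: mult_left_le)
qed

definition "K1 = max 0 (ln (32 * \<sigma>0\<^sup>2 / \<alpha>\<^sup>2) / (2 * \<nu>))"
definition "T1 = \<tau>0 * exp K1"

lemma T1_ge: "\<tau>0 \<le> T1"
  unfolding T1_def K1_def using t0 by simp

lemma B1_small: assumes s: "T1 \<le> s" shows "B1 s \<le> (\<alpha> / 4)\<^sup>2"
proof -
  have tp: "\<tau>0 > 0" using t0 by simp
  have sp: "s > 0" using s T1_ge tp by simp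
  have "ln (T1 / \<tau>0) = K1" unfolding T1_def using tp by simp
  moreover have "ln (T1 / \<tau>0) \<le> ln (s / \<tau>0)" using s T1_ge tp by (simp add: divide_right_mono)
  ultimately have K: "K1 \<le> ln (s / \<tau>0)" by simp
  have "(w s)\<^sup>2 = exp (- (2 * \<nu>) * ln (s / \<tau>0))" unfolding w_def by (simp add: power2_eq_square flip: exp_add)
  also have "\<dots> \<le> exp (- (2 * \<nu>) * K1)" using K cst(4) by simp
  also have "\<dots> \<le> exp (- ln (32 * \<sigma>0\<^sup>2 / \<alpha>\<^sup>2))"
  proof -
    have "ln (32 * \<sigma>0\<^sup>2 / \<alpha>\<^sup>2) / (2 * \<nu>) \<le> K1" unfolding K1_def by simp
    then have "ln (32 * \<sigma>0\<^sup>2 / \<alpha>\<^sup>2) \<le> (2 * \<nu>) * K1" using cst(4) by (simp add: pos_divide_le_eq mult.commute)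
    then show ?thesis by simp
  qed
  also have "\<dots> = \<alpha>\<^sup>2 / (32 * \<sigma>0\<^sup>2)"
  proof -
    have X: "32 * \<sigma>0\<^sup>2 / \<alpha>\<^sup>2 > 0" using alpha cst by simp
    have "exp (- ln (32 * \<sigma>0\<^sup>2 / \<alpha>\<^sup>2)) = inverse (32 * \<sigma>0\<^sup>2 / \<alpha>\<^sup>2)"
      by (simp only: exp_minus exp_ln[OF X])
    then show ?thesis by simp
  qed
  finally have "(w s)\<^sup>2 \<le> \<alpha>\<^sup>2 / (32 * \<sigma>0\<^sup>2)" .
  then have "B1 s \<le> 2 * \<sigma>0\<^sup>2 * (\<alpha>\<^sup>2 / (32 * \<sigma>0\<^sup>2))" unfolding B1_def by (rule mult_left_mono) simp
  also have "\<dots> = (\<alpha> / 4)\<^sup>2" using cst by (simp add: field_simps power2_eq_square)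
  finally show ?thesis .
qed

lemma coef_small:
  assumes s: "T1 \<le> s"
  shows "\<bar>1 - 2 * (DP 1 0 s \<theta> + exp (- s) * DP 0 1 s \<theta>)\<bar> \<le> 1 - \<alpha>"
    "\<bar>1 - 2 * (DP 1 0 s \<theta> - exp (- s) * DP 0 1 s \<theta>)\<bar> \<le> 1 - \<alpha>"
proof -
  have s0: "\<tau>0 \<le> s" using s T1_ge by simp
  have F: "Fp s \<theta> + Fm s \<theta> \<le> (\<alpha> / 4)\<^sup>2" using Gall[OF s0] B1_small[OF s] order.trans by blast
  note sq = zero_le_power2[of "xp s \<theta>"] zero_le_power2[of "Am s \<theta>"] zero_le_power2[of "xm s \<theta>"] zero_le_power2[of "Ap s \<theta>"]
  have "(Ap s \<theta>)\<^sup>2 \<le> (\<alpha> / 4)\<^sup>2" using F sq unfolding Fp_def Fm_def by linarith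
  then have a: "\<bar>Ap s \<theta>\<bar> \<le> \<alpha> / 4" using alpha by (simp add: abs_le_square_iff[symmetric])
  have "(Am s \<theta>)\<^sup>2 \<le> (\<alpha> / 4)\<^sup>2" using F sq unfolding Fp_def Fm_def by linarith
  then have b: "\<bar>Am s \<theta>\<bar> \<le> \<alpha> / 4" using alpha by (simp add: abs_le_square_iff[symmetric])
  have p: "m \<le> DP 0 0 s \<theta> / s" "DP 0 0 s \<theta> / s \<le> 1 - m" using drift_all[OF s0] by auto
  have e1: "DP 1 0 s \<theta> + exp (- s) * DP 0 1 s \<theta> = DP 0 0 s \<theta> / s + Ap s \<theta>" unfolding Ap_def by simp
  have e2: "DP 1 0 s \<theta> - exp (- s) * DP 0 1 s \<theta> = DP 0 0 s \<theta> / s + Am s \<theta>" unfolding Am_def by simp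
  show "\<bar>1 - 2 * (DP 1 0 s \<theta> + exp (- s) * DP 0 1 s \<theta>)\<bar> \<le> 1 - \<alpha>"
    unfolding e1 using a p cst(9) by (simp add: abs_le_iff) linarith
  show "\<bar>1 - 2 * (DP 1 0 s \<theta> - exp (- s) * DP 0 1 s \<theta>)\<bar> \<le> 1 - \<alpha>"
    unfolding e2 using b p cst(9) by (simp add: abs_le_iff) linarith
qed

end


context gw begin

definition "\<beta> = 3 * \<alpha> / 4"
definition "B2 s = B1 T1 * exp (- \<beta> * (s - T1))"

lemma gam_half: "\<gamma> \<le> 1 / 2" using Pgam[of 0] by simp

lemma B2_deriv: "(B2 has_real_derivative (- \<beta> * B2 s)) (at s within S)"
  unfolding B2_def by (auto intro!: derivative_eq_intros)

lemma B2_pos: "B2 s > 0" unfolding B2_def using B1_pos by simp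

lemma step2: assumes "T1 \<le> t" shows "(xp t \<theta>)\<^sup>2 + (xm t \<theta>')\<^sup>2 < B2 t"
proof (rule barrier[OF continuous_on_subset[OF xp_cont] continuous_on_subset[OF xm_cont] _ _ _ _ _ assms])
  show "{T1..} \<times> UNIV \<subseteq> {\<tau>0..} \<times> UNIV" using T1_ge by auto
  then show "{T1..} \<times> UNIV \<subseteq> {\<tau>0..} \<times> UNIV" .
  show "continuous_on {T1..} B2" by (rule DERIV_continuous_on[OF B2_deriv])
  show "\<exists>\<theta>0\<in>{0..2 * pi}. (xp t \<theta>)\<^sup>2 = (xp t \<theta>0)\<^sup>2" if "T1 \<le> t" for t \<theta>
    using red_all[of t] red_range that T1_ge by (metis order.trans)
  show "\<exists>\<theta>0\<in>{0..2 * pi}. (xm t \<theta>)\<^sup>2 = (xm t \<theta>0)\<^sup>2" if "T1 \<le> t" for t \<theta>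
    using red_all[of t] red_range that T1_ge by (metis order.trans)
  show "(xp T1 \<theta>)\<^sup>2 + (xm T1 \<theta>')\<^sup>2 < B2 T1" for \<theta> \<theta>'
  proof -
    have "Fp T1 \<theta> + Fm T1 \<theta>' < B1 T1" by (rule step1[OF T1_ge])
    moreover have "(xp T1 \<theta>)\<^sup>2 \<le> Fp T1 \<theta>" "(xm T1 \<theta>')\<^sup>2 \<le> Fm T1 \<theta>'" unfolding Fp_def Fm_def by simp_all
    ultimately show ?thesis unfolding B2_def by simp
  qed
next
  fix \<tau>1 \<theta>1 \<theta>1'
  assume Tl: "T1 < \<tau>1"
    and strict: "\<And>s \<theta> \<theta>'. T1 \<le> s \<Longrightarrow> s < \<tau>1 \<Longrightarrow> (xp s \<theta>)\<^sup>2 + (xm s \<theta>')\<^sup>2 < B2 s"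
    and le: "\<And>\<theta> \<theta>'. (xp \<tau>1 \<theta>)\<^sup>2 + (xm \<tau>1 \<theta>')\<^sup>2 \<le> B2 \<tau>1"
    and eq: "(xp \<tau>1 \<theta>1)\<^sup>2 + (xm \<tau>1 \<theta>1')\<^sup>2 = B2 \<tau>1"
  have t1: "\<tau>0 \<le> \<tau>1" "T1 \<le> \<tau>1" using Tl T1_ge by auto
  define c1 where "c1 = \<theta>1 - exp (- \<tau>1)"
  define c2 where "c2 = \<theta>1' + exp (- \<tau>1)"
  have c1e: "c1 + exp (- \<tau>1) = \<theta>1" and c2e: "c2 - exp (- \<tau>1) = \<theta>1'" by (simp_all add: c1_def c2_def)
  define \<phi> where "\<phi> s = (xp s (c1 + exp (- s)))\<^sup>2 + (xm s (c2 - exp (- s)))\<^sup>2 - B2 s" for s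
  define k1 where "k1 = 1 - 2 * (DP 1 0 \<tau>1 \<theta>1 + exp (- \<tau>1) * DP 0 1 \<tau>1 \<theta>1)"
  define k2 where "k2 = 1 - 2 * (DP 1 0 \<tau>1 \<theta>1' - exp (- \<tau>1) * DP 0 1 \<tau>1 \<theta>1')"
  define d where "d = (- (xp \<tau>1 \<theta>1)\<^sup>2 + k1 * xp \<tau>1 \<theta>1 * xm \<tau>1 \<theta>1)
    + (- (xm \<tau>1 \<theta>1')\<^sup>2 + k2 * xm \<tau>1 \<theta>1' * xp \<tau>1 \<theta>1') - (- \<beta> * B2 \<tau>1)"
  have "(\<phi> has_real_derivative d) (at \<tau>1 within {\<tau>0..})"
    unfolding \<phi>_def d_def k1_def k2_def
    using DERIV_diff[OF DERIV_add[OF xp_d[OF t1(1), of c1] xm_d[OF t1(1), of c2]] B2_deriv]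
    unfolding c1e c2e .
  then have dphi: "(\<phi> has_real_derivative d) (at \<tau>1 within {T1..})"
    by (rule has_field_derivative_subset) (use T1_ge in auto)
  have "d \<ge> 0"
  proof (rule touch_deriv[OF Tl dphi])
    show "\<phi> s < 0" if "T1 \<le> s" "s < \<tau>1" for s
      using strict[OF that] unfolding \<phi>_def by simp
    show "\<phi> \<tau>1 = 0" unfolding \<phi>_def c1e c2e using eq by simp
  qed
  moreover have "d < 0"
  proof -
    have l0: "0 \<le> 1 - \<alpha>" using alpha gam_half by simp
    have a1: "\<bar>k1\<bar> \<le> 1 - \<alpha>" unfolding k1_def by (rule coef_small(1)[OF t1(2)])
    have a2: "\<bar>k2\<bar> \<le> 1 - \<alpha>" unfolding k2_def by (rule coef_small(2)[OF t1(2)])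
    have q1: "k1 * xp \<tau>1 \<theta>1 * xm \<tau>1 \<theta>1 \<le> (1 - \<alpha>) * ((xp \<tau>1 \<theta>1)\<^sup>2 + (xm \<tau>1 \<theta>1)\<^sup>2) / 2"
      using key_ineq[OF l0 a1, of 0 0 "xp \<tau>1 \<theta>1" "xm \<tau>1 \<theta>1"] by simp
    have q2: "k2 * xm \<tau>1 \<theta>1' * xp \<tau>1 \<theta>1' \<le> (1 - \<alpha>) * ((xp \<tau>1 \<theta>1')\<^sup>2 + (xm \<tau>1 \<theta>1')\<^sup>2) / 2"
      using key_ineq[OF l0 a2, of 0 0 "xm \<tau>1 \<theta>1'" "xp \<tau>1 \<theta>1'"] by (simp add: add.commute)
    have "(1 - \<alpha>) * ((xp \<tau>1 \<theta>1)\<^sup>2 + (xm \<tau>1 \<theta>1)\<^sup>2) \<le> (1 - \<alpha>) * B2 \<tau>1"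
      using le[of \<theta>1 \<theta>1] l0 by (rule mult_left_mono)
    moreover have "(1 - \<alpha>) * ((xp \<tau>1 \<theta>1')\<^sup>2 + (xm \<tau>1 \<theta>1')\<^sup>2) \<le> (1 - \<alpha>) * B2 \<tau>1"
      using le[of \<theta>1' \<theta>1'] l0 by (rule mult_left_mono)
    moreover have "\<beta> * B2 \<tau>1 < \<alpha> * B2 \<tau>1" using B2_pos[of \<tau>1] alpha unfolding \<beta>_def by simp
    ultimately show ?thesis using q1 q2 eq unfolding d_def by (simp add: field_simps)
  qed
  ultimately show False by simp
qed

definition "C1 = 2 * \<sigma>0\<^sup>2 * exp (\<beta> * T1)"

lemma x_decay: assumes s: "\<tau>0 \<le> s" shows "(xp s \<theta>)\<^sup>2 + (xm s \<theta>)\<^sup>2 \<le> C1 * exp (- \<beta> * s)"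
proof (cases "T1 \<le> s")
  case True
  have "(xp s \<theta>)\<^sup>2 + (xm s \<theta>)\<^sup>2 \<le> B2 s" using step2[OF True] by (simp add: less_imp_le)
  also have "\<dots> = B1 T1 * exp (\<beta> * T1) * exp (- \<beta> * s)" unfolding B2_def
    by (simp add: algebra_simps flip: exp_add)
  also have "\<dots> \<le> C1 * exp (- \<beta> * s)" unfolding C1_def
    using B1_le[OF T1_ge] by (simp add: mult_right_mono)
  finally show ?thesis .
next
  case False
  have "(xp s \<theta>)\<^sup>2 + (xm s \<theta>)\<^sup>2 \<le> Fp s \<theta> + Fm s \<theta>" unfolding Fp_def Fm_def by simp
  also have "\<dots> \<le> B1 s" by (rule Gall[OF s])
  also have "\<dots> \<le> 2 * \<sigma>0\<^sup>2" by (rule B1_le[OF s])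
  also have "\<dots> \<le> 2 * \<sigma>0\<^sup>2 * (exp (\<beta> * T1) * exp (- \<beta> * s))"
  proof -
    have "\<beta> * s \<le> \<beta> * T1" using False alpha unfolding \<beta>_def by simp
    then have "1 \<le> exp (\<beta> * T1) * exp (- \<beta> * s)" by (simp flip: exp_add)
    then show ?thesis by (simp add: mult_le_cancel_left1)
  qed
  also have "\<dots> = C1 * exp (- \<beta> * s)" unfolding C1_def by simp
  finally show ?thesis .
qed

end


lemma amgm_abs: "2 * \<bar>x\<bar> * \<bar>y\<bar> \<le> x\<^sup>2 + (y::real)\<^sup>2"
  using sum_squares_ge_zero[of "\<bar>x\<bar> - \<bar>y\<bar>" 0] by (simp add: power2_eq_square algebra_simps)

lemma amgm_w: assumes "0 < (h::real)" shows "2 * \<bar>a\<bar> * \<bar>b\<bar> \<le> (a\<^sup>2 + h\<^sup>2 * b\<^sup>2) / h"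
proof -
  have "2 * \<bar>a\<bar> * \<bar>h * b\<bar> \<le> a\<^sup>2 + (h * b)\<^sup>2" by (rule amgm_abs)
  then have "h * (2 * \<bar>a\<bar> * \<bar>b\<bar>) \<le> a\<^sup>2 + h\<^sup>2 * b\<^sup>2" using assms by (simp add: abs_mult power_mult_distrib algebra_simps)
  then show ?thesis using assms by (simp add: le_divide_eq mult.commute)
qed

lemma prod3: "\<bar>x\<bar> \<le> (U::real) \<Longrightarrow> 2 * x * y * z \<le> U * (y\<^sup>2 + z\<^sup>2)"
proof -
  assume xu: "\<bar>x\<bar> \<le> U"
  have "2 * x * y * z \<le> \<bar>x\<bar> * (2 * \<bar>y\<bar> * \<bar>z\<bar>)" by (simp add: abs_mult[symmetric] mult.assoc)
  also have "\<dots> \<le> \<bar>x\<bar> * (y\<^sup>2 + z\<^sup>2)" by (rule mult_left_mono[OF amgm_abs]) simp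
  also have "\<dots> \<le> U * (y\<^sup>2 + z\<^sup>2)" by (rule mult_right_mono[OF xu]) simp
  finally show ?thesis .
qed

lemma pt_bound:
  fixes a b c q qy qz E e h X U p al XY :: real
  assumes p: "0 \<le> p" "p \<le> 1" and h: "0 < h" and al: "0 \<le> al" and XY: "\<bar>XY\<bar> \<le> X" and U: "\<bar>E * e * q\<bar> \<le> U"
  shows "2*a*b*XY - 2*E\<^sup>2*e\<^sup>2*a*q*qz + 2*E\<^sup>2*e\<^sup>2*qy*c*q - e\<^sup>2*c\<^sup>2 - p*E\<^sup>2*qy\<^sup>2 + (p-1)*E\<^sup>2*e\<^sup>2*qz\<^sup>2
          - al/2*h\<^sup>2*b\<^sup>2 + h\<^sup>2*b*a
        \<le> (2*X/h + 4*U + h) * (1/2*(a\<^sup>2 + e\<^sup>2*c\<^sup>2 + E\<^sup>2*(qy\<^sup>2 + e\<^sup>2*qz\<^sup>2) + h\<^sup>2*b\<^sup>2))"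
proof -
  define J where "J = 1/2*(a\<^sup>2 + e\<^sup>2*c\<^sup>2 + E\<^sup>2*(qy\<^sup>2 + e\<^sup>2*qz\<^sup>2) + h\<^sup>2*b\<^sup>2)"
  have X0: "0 \<le> X" using XY by linarith
  have U0: "0 \<le> U" using U by linarith
  have sq: "0 \<le> a\<^sup>2" "0 \<le> e\<^sup>2*c\<^sup>2" "0 \<le> E\<^sup>2*qy\<^sup>2" "0 \<le> E\<^sup>2*e\<^sup>2*qz\<^sup>2" "0 \<le> h\<^sup>2*b\<^sup>2" by simp_all
  have eJ: "2 * J = a\<^sup>2 + e\<^sup>2*c\<^sup>2 + E\<^sup>2*qy\<^sup>2 + E\<^sup>2*e\<^sup>2*qz\<^sup>2 + h\<^sup>2*b\<^sup>2" unfolding J_def by (simp add: algebra_simps)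
  have j1: "a\<^sup>2 + h\<^sup>2*b\<^sup>2 \<le> 2 * J" using sq eJ by linarith
  have j2: "a\<^sup>2 + (E*e*qz)\<^sup>2 \<le> 2 * J" using sq eJ by (simp add: power_mult_distrib)
  have j3: "(E*qy)\<^sup>2 + (e*c)\<^sup>2 \<le> 2 * J" using sq eJ by (simp add: power_mult_distrib)
  have t1: "2*a*b*XY \<le> X/h * (2 * J)"
  proof -
    have "2*a*b*XY \<le> \<bar>XY\<bar> * (2 * \<bar>a\<bar> * \<bar>b\<bar>)" by (simp add: abs_mult[symmetric] mult.commute mult.left_commute)
    also have "\<dots> \<le> X * ((a\<^sup>2 + h\<^sup>2 * b\<^sup>2) / h)" by (rule mult_mono[OF XY amgm_w[OF h]]) (simp_all add: X0)
    also have "\<dots> = X/h * (a\<^sup>2 + h\<^sup>2 * b\<^sup>2)" by simp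
    also have "\<dots> \<le> X/h * (2 * J)" by (rule mult_left_mono[OF j1]) (simp add: X0 h less_imp_le)
    finally show ?thesis .
  qed
  have t2: "- 2*E\<^sup>2*e\<^sup>2*a*q*qz \<le> U * (2 * J)"
  proof -
    have "- 2*E\<^sup>2*e\<^sup>2*a*q*qz = 2 * (- (E*e*q)) * a * (E*e*qz)" by (simp add: power2_eq_square algebra_simps)
    also have "\<dots> \<le> U * (a\<^sup>2 + (E*e*qz)\<^sup>2)" by (rule prod3) (use U in simp)
    also have "\<dots> \<le> U * (2 * J)" by (rule mult_left_mono[OF j2 U0])
    finally show ?thesis .
  qed
  have t3: "2*E\<^sup>2*e\<^sup>2*qy*c*q \<le> U * (2 * J)"
  proof -
    have "2*E\<^sup>2*e\<^sup>2*qy*c*q = 2 * (E*e*q) * (E*qy) * (e*c)" by (simp add: power2_eq_square algebra_simps)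
    also have "\<dots> \<le> U * ((E*qy)\<^sup>2 + (e*c)\<^sup>2)" by (rule prod3[OF U])
    also have "\<dots> \<le> U * (2 * J)" by (rule mult_left_mono[OF j3 U0])
    finally show ?thesis .
  qed
  have t4: "h\<^sup>2*b*a \<le> h * J"
  proof -
    have "h\<^sup>2*b*a = h * (h*b*a)" by (simp add: power2_eq_square)
    also have "\<dots> \<le> h * ((h*b)\<^sup>2 + a\<^sup>2) / 2"
    proof -
      have "h*b*a \<le> \<bar>h*b\<bar>*\<bar>a\<bar>" by (metis abs_ge_self abs_mult)
      with amgm_abs[of "h*b" a] have "2*(h*b*a) \<le> (h*b)\<^sup>2 + a\<^sup>2" by linarith
      then have "h*(2*(h*b*a)) \<le> h*((h*b)\<^sup>2 + a\<^sup>2)" by (rule mult_left_mono) (use h in simp)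
      moreover have "h*(2*(h*b*a)) = 2*(h*(h*b*a))" by simp
      ultimately show ?thesis by linarith
    qed
    also have "\<dots> \<le> h * J"
    proof -
      have "(h*b)\<^sup>2 + a\<^sup>2 \<le> 2*J" using j1 by (simp add: power_mult_distrib)
      then have "h*((h*b)\<^sup>2 + a\<^sup>2) \<le> h*(2*J)" by (rule mult_left_mono) (use h in simp)
      moreover have "h*(2*J) = 2*(h*J)" by simp
      ultimately show ?thesis by linarith
    qed
    finally show ?thesis .
  qed
  have n1: "- e\<^sup>2*c\<^sup>2 \<le> 0" "- p*E\<^sup>2*qy\<^sup>2 \<le> 0" "(p-1)*E\<^sup>2*e\<^sup>2*qz\<^sup>2 \<le> 0" "- al/2*h\<^sup>2*b\<^sup>2 \<le> 0"
    using p al by (simp_all add: mult_nonneg_nonneg mult_nonpos_nonneg)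
  have "(2*X/h + 4*U + h) * J = X/h * (2 * J) + U * (2 * J) + U * (2 * J) + h * J" by (simp add: algebra_simps)
  then show ?thesis using t1 t2 t3 t4 n1 unfolding J_def[symmetric] by linarith
qed



lemma energy_identity:
  fixes pb pc pd pe pf pg pq qb qc qd qe qf qg qq E e h al :: real
  assumes pq: "pq = e\<^sup>2*pg + 2*pc*E\<^sup>2*(qb\<^sup>2 - e\<^sup>2*qc\<^sup>2) + E\<^sup>2*(2*qb*qd - 2*e\<^sup>2*qc*qe)"
    and qq: "qq = e\<^sup>2*qg - 2*(pd*qb + pb*qd - e\<^sup>2*pe*qc - e\<^sup>2*pc*qe)"
  shows "(pd*pq - e\<^sup>2*pe\<^sup>2 + e\<^sup>2*pe*pf + E\<^sup>2*pb*(qd\<^sup>2 + e\<^sup>2*qe\<^sup>2) + E\<^sup>2*(qd*qq - e\<^sup>2*qe\<^sup>2 + e\<^sup>2*qe*qf)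
          - al/2*h\<^sup>2*pc\<^sup>2 + h\<^sup>2*pc*pd)
        - e\<^sup>2*(pg*pd + pe*pf) - e\<^sup>2*(2*pc*E\<^sup>2*qe*qd + E\<^sup>2*qg*qd + E\<^sup>2*qe*qf)
       = 2*pd*pc*(E*(qb + e*qc) * (E*(qb - e*qc))) - 2*E\<^sup>2*e\<^sup>2*pd*qc*qe + 2*E\<^sup>2*e\<^sup>2*qd*pe*qc - e\<^sup>2*pe\<^sup>2
          - pb*E\<^sup>2*qd\<^sup>2 + (pb-1)*E\<^sup>2*e\<^sup>2*qe\<^sup>2 - al/2*h\<^sup>2*pc\<^sup>2 + h\<^sup>2*pc*pd"
  unfolding pq qq by (simp add: power2_eq_square algebra_simps)

context gw begin

lemma eqP_th: assumes t: "\<tau>0 \<le> t"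
  shows "DP 2 1 t \<theta> = (exp (- t))\<^sup>2 * DP 0 3 t \<theta> + 2 * DP 0 1 t \<theta> * (exp (DP 0 0 t \<theta>))\<^sup>2 * ((DQ 1 0 t \<theta>)\<^sup>2 - (exp (- t))\<^sup>2 * (DQ 0 1 t \<theta>)\<^sup>2)
     + (exp (DP 0 0 t \<theta>))\<^sup>2 * (2 * DQ 1 0 t \<theta> * DQ 1 1 t \<theta> - 2 * (exp (- t))\<^sup>2 * DQ 0 1 t \<theta> * DQ 0 2 t \<theta>)"
proof -
  let ?f = "\<lambda>\<phi>. DP 2 0 t \<phi> - ((exp (- t))\<^sup>2 * DP 0 2 t \<phi>
     + (exp (DP 0 0 t \<phi>))\<^sup>2 * ((DQ 1 0 t \<phi>)\<^sup>2 - (exp (- t))\<^sup>2 * (DQ 0 1 t \<phi>)\<^sup>2))"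
  let ?X = "DP 2 1 t \<theta> - ((exp (- t))\<^sup>2 * DP 0 3 t \<theta> + 2 * DP 0 1 t \<theta> * (exp (DP 0 0 t \<theta>))\<^sup>2 * ((DQ 1 0 t \<theta>)\<^sup>2 - (exp (- t))\<^sup>2 * (DQ 0 1 t \<theta>)\<^sup>2)
     + (exp (DP 0 0 t \<theta>))\<^sup>2 * (2 * DQ 1 0 t \<theta> * DQ 1 1 t \<theta> - 2 * (exp (- t))\<^sup>2 * DQ 0 1 t \<theta> * DQ 0 2 t \<theta>))"
  have d: "(?f has_real_derivative ?X) (at \<theta>)"
    by (auto intro!: derivative_eq_intros sf_dth[OF smP t] sf_dth[OF smQ t] simp: numeral_eq_Suc power2_eq_square algebra_simps)
  have "?f = (\<lambda>\<phi>. 0)" using eqP'[OF t] by (simp add: fun_eq_iff)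
  then have d0: "(?f has_real_derivative 0) (at \<theta>)" by simp
  have "?X = 0" by (rule DERIV_unique[OF d d0])
  then show ?thesis by simp
qed

lemma eqQ_th: assumes t: "\<tau>0 \<le> t"
  shows "DQ 2 1 t \<theta> = (exp (- t))\<^sup>2 * DQ 0 3 t \<theta>
     - 2 * (DP 1 1 t \<theta> * DQ 1 0 t \<theta> + DP 1 0 t \<theta> * DQ 1 1 t \<theta> - (exp (- t))\<^sup>2 * DP 0 2 t \<theta> * DQ 0 1 t \<theta>
            - (exp (- t))\<^sup>2 * DP 0 1 t \<theta> * DQ 0 2 t \<theta>)"
proof -
  let ?f = "\<lambda>\<phi>. DQ 2 0 t \<phi> - ((exp (- t))\<^sup>2 * DQ 0 2 t \<phi>
     - 2 * (DP 1 0 t \<phi> * DQ 1 0 t \<phi> - (exp (- t))\<^sup>2 * DP 0 1 t \<phi> * DQ 0 1 t \<phi>))"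
  let ?X = "DQ 2 1 t \<theta> - ((exp (- t))\<^sup>2 * DQ 0 3 t \<theta>
     - 2 * (DP 1 1 t \<theta> * DQ 1 0 t \<theta> + DP 1 0 t \<theta> * DQ 1 1 t \<theta> - (exp (- t))\<^sup>2 * DP 0 2 t \<theta> * DQ 0 1 t \<theta>
            - (exp (- t))\<^sup>2 * DP 0 1 t \<theta> * DQ 0 2 t \<theta>))"
  have d: "(?f has_real_derivative ?X) (at \<theta>)"
    by (auto intro!: derivative_eq_intros sf_dth[OF smP t] sf_dth[OF smQ t] simp: numeral_eq_Suc power2_eq_square algebra_simps)
  have "?f = (\<lambda>\<phi>. 0)" using eqQ'[OF t] by (simp add: fun_eq_iff)
  then have d0: "(?f has_real_derivative 0) (at \<theta>)" by simp
  have "?X = 0" by (rule DERIV_unique[OF d d0])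
  then show ?thesis by simp
qed

end


context gw begin

definition "hh t = exp (- (\<alpha> / 2) * t)"
definition "Jd t \<theta> = 1/2 * ((DP 1 1 t \<theta>)\<^sup>2 + (exp (- t))\<^sup>2 * (DP 0 2 t \<theta>)\<^sup>2
   + (exp (DP 0 0 t \<theta>))\<^sup>2 * ((DQ 1 1 t \<theta>)\<^sup>2 + (exp (- t))\<^sup>2 * (DQ 0 2 t \<theta>)\<^sup>2) + (hh t)\<^sup>2 * (DP 0 1 t \<theta>)\<^sup>2)"
definition "dJ t \<theta> = DP 1 1 t \<theta> * DP 2 1 t \<theta> - (exp (- t))\<^sup>2 * (DP 0 2 t \<theta>)\<^sup>2 + (exp (- t))\<^sup>2 * DP 0 2 t \<theta> * DP 1 2 t \<theta>
   + (exp (DP 0 0 t \<theta>))\<^sup>2 * DP 1 0 t \<theta> * ((DQ 1 1 t \<theta>)\<^sup>2 + (exp (- t))\<^sup>2 * (DQ 0 2 t \<theta>)\<^sup>2)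
   + (exp (DP 0 0 t \<theta>))\<^sup>2 * (DQ 1 1 t \<theta> * DQ 2 1 t \<theta> - (exp (- t))\<^sup>2 * (DQ 0 2 t \<theta>)\<^sup>2 + (exp (- t))\<^sup>2 * DQ 0 2 t \<theta> * DQ 1 2 t \<theta>)
   - \<alpha> / 2 * (hh t)\<^sup>2 * (DP 0 1 t \<theta>)\<^sup>2 + (hh t)\<^sup>2 * DP 0 1 t \<theta> * DP 1 1 t \<theta>"

lemma Jd_deriv: "\<tau>0 \<le> t \<Longrightarrow> ((\<lambda>s. Jd s \<theta>) has_real_derivative dJ t \<theta>) (at t within {\<tau>0..})"
  unfolding Jd_def dJ_def hh_def
  by (auto intro!: derivative_eq_intros sf_dt[OF smP] sf_dt[OF smQ]
      simp: numeral_eq_Suc One_nat_def power2_eq_square field_simps)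

lemma Jd_nonneg: "0 \<le> Jd t \<theta>" unfolding Jd_def by simp

lemma dJ_cont: "continuous_on ({\<tau>0..} \<times> UNIV) (\<lambda>(t, \<theta>). dJ t \<theta>)"
  unfolding dJ_def hh_def split_beta
  by (intro continuous_intros contP contQ)

lemma Jd_int: "\<tau>0 \<le> t \<Longrightarrow> Jd t integrable_on {0..2*pi}"
  unfolding Jd_def hh_def
  by (intro integrable_continuous_interval continuous_intros contP_th contQ_th) auto

lemma int_deriv: "\<tau>0 \<le> t \<Longrightarrow> ((\<lambda>t. integral {0..2*pi} (Jd t)) has_real_derivative integral {0..2*pi} (dJ t)) (at t within {\<tau>0..})"
proof -
  assume t: "\<tau>0 \<le> t"
  have "((\<lambda>t. integral (cbox 0 (2*pi)) (Jd t)) has_real_derivative integral (cbox 0 (2*pi)) (dJ t)) (at t within {\<tau>0..})"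
  proof (rule leibniz_rule_field_derivative)
    show "\<And>x \<theta>. x \<in> {\<tau>0..} \<Longrightarrow> \<theta> \<in> cbox 0 (2 * pi) \<Longrightarrow> ((\<lambda>x. Jd x \<theta>) has_real_derivative dJ x \<theta>) (at x within {\<tau>0..})"
      using Jd_deriv by auto
    show "\<And>x. x \<in> {\<tau>0..} \<Longrightarrow> Jd x integrable_on cbox 0 (2 * pi)" using Jd_int by auto
    show "continuous_on ({\<tau>0..} \<times> cbox 0 (2 * pi)) (\<lambda>(x, \<theta>). dJ x \<theta>)"
      by (rule continuous_on_subset[OF dJ_cont]) auto
  qed (use t in auto)
  then show ?thesis by simp
qed

lemma Hk_eq: "\<tau>0 \<le> t \<Longrightarrow> Hk \<alpha> DP DQ 1 t = 1 + integral {0..2*pi} (Jd t)"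
proof -
  assume t: "\<tau>0 \<le> t"
  let ?f1 = "\<lambda>\<theta>. (DP 1 1 t \<theta>)\<^sup>2 + (exp (- t))\<^sup>2 * (DP 0 2 t \<theta>)\<^sup>2"
  let ?f2 = "\<lambda>\<theta>. (exp (DP 0 0 t \<theta>))\<^sup>2 * ((DQ 1 1 t \<theta>)\<^sup>2 + (exp (- t))\<^sup>2 * (DQ 0 2 t \<theta>)\<^sup>2)"
  let ?f3 = "\<lambda>\<theta>. (DP 0 1 t \<theta>)\<^sup>2"
  have i1: "?f1 integrable_on {0..2*pi}" by (intro integrable_continuous_interval continuous_intros contP_th contQ_th t)
  have i2: "?f2 integrable_on {0..2*pi}" by (intro integrable_continuous_interval continuous_intros contP_th contQ_th t)
  have i3: "(\<lambda>\<theta>. (hh t)\<^sup>2 * ?f3 \<theta>) integrable_on {0..2*pi}" by (intro integrable_continuous_interval continuous_intros contP_th contQ_th t)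
  have "Jd t = (\<lambda>\<theta>. 1/2 * ((?f1 \<theta> + ?f2 \<theta>) + (hh t)\<^sup>2 * ?f3 \<theta>))" unfolding Jd_def by (auto simp: fun_eq_iff)
  then have "integral {0..2*pi} (Jd t) = 1/2 * (integral {0..2*pi} ?f1 + integral {0..2*pi} ?f2 + (hh t)\<^sup>2 * integral {0..2*pi} ?f3)"
    using i1 i2 i3 by (simp add: integral_add integrable_add)
  moreover have "Hk \<alpha> DP DQ 1 t = 1 + 1/2 * integral {0..2*pi} ?f1 + 1/2 * integral {0..2*pi} ?f2 + 1/2 * (hh t)\<^sup>2 * integral {0..2*pi} ?f3"
    unfolding Hk_def curlyE_def Eng_def hh_def exp2 Suc_1 by (simp add: power2_eq_square flip: exp_add)
  ultimately show ?thesis by (simp add: algebra_simps)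
qed

end


lemma per_int_zero:
  fixes f f' :: "real \<Rightarrow> real"
  assumes d: "\<And>x. (f has_real_derivative f' x) (at x)" and p: "f (2*pi) = f 0"
  shows "integral {0..2*pi} f' = 0"
proof -
  have "(f' has_integral (f (2*pi) - f 0)) {0..2*pi}"
  proof (rule fundamental_theorem_of_calculus)
    show "0 \<le> 2*pi" by simp
    show "(f has_vector_derivative f' x) (at x within {0..2*pi})" if "x \<in> {0..2*pi}" for x
      using has_field_derivative_at_within[OF d[of x]] by (simp add: has_real_derivative_iff_has_vector_derivative)
  qed
  then show ?thesis using p by (simp add: integral_unique)
qed

lemma sqrt_exp: "sqrt (exp x) = exp (x / 2)"
proof -
  have "exp x = (exp (x/2))\<^sup>2" by (simp add: power2_eq_square flip: exp_add)
  then show ?thesis by simp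
qed

context gw begin

definition "E1d t \<theta> = DP 0 3 t \<theta> * DP 1 1 t \<theta> + DP 0 2 t \<theta> * DP 1 2 t \<theta>"
definition "E2d t \<theta> = 2 * DP 0 1 t \<theta> * (exp (DP 0 0 t \<theta>))\<^sup>2 * DQ 0 2 t \<theta> * DQ 1 1 t \<theta>
   + (exp (DP 0 0 t \<theta>))\<^sup>2 * DQ 0 3 t \<theta> * DQ 1 1 t \<theta> + (exp (DP 0 0 t \<theta>))\<^sup>2 * DQ 0 2 t \<theta> * DQ 1 2 t \<theta>"

lemma E1_int: assumes t: "\<tau>0 \<le> t" shows "integral {0..2*pi} (E1d t) = 0"
proof (rule per_int_zero)
  show "((\<lambda>\<phi>. DP 0 2 t \<phi> * DP 1 1 t \<phi>) has_real_derivative E1d t x) (at x)" for x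
    unfolding E1d_def
    by (auto intro!: derivative_eq_intros sf_dth[OF smP t] simp: numeral_eq_Suc One_nat_def algebra_simps)
  show "DP 0 2 t (2 * pi) * DP 1 1 t (2 * pi) = DP 0 2 t 0 * DP 1 1 t 0"
    using sf_per[OF smP perP t, of _ _ 0] by simp
qed

lemma E2_int: assumes t: "\<tau>0 \<le> t" shows "integral {0..2*pi} (E2d t) = 0"
proof (rule per_int_zero)
  show "((\<lambda>\<phi>. (exp (DP 0 0 t \<phi>))\<^sup>2 * DQ 0 2 t \<phi> * DQ 1 1 t \<phi>) has_real_derivative E2d t x) (at x)" for x
    unfolding E2d_def
    by (auto intro!: derivative_eq_intros sf_dth[OF smP t] sf_dth[OF smQ t]
        simp: numeral_eq_Suc One_nat_def power2_eq_square algebra_simps)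
  show "(exp (DP 0 0 t (2 * pi)))\<^sup>2 * DQ 0 2 t (2 * pi) * DQ 1 1 t (2 * pi) = (exp (DP 0 0 t 0))\<^sup>2 * DQ 0 2 t 0 * DQ 1 1 t 0"
    using sf_per[OF smP perP t, of _ _ 0] sf_per[OF smQ perQ t, of _ _ 0] by simp
qed

definition "Xb t = C1 * exp (- \<beta> * t) / 2"
definition "Ub t = sqrt (C1 * exp (- \<beta> * t) / 2)"
definition "kk t = 2 * Xb t / hh t + 4 * Ub t + hh t"

lemma pointwise:
  assumes t: "\<tau>0 \<le> t"
  shows "dJ t \<theta> - (exp (- t))\<^sup>2 * E1d t \<theta> - (exp (- t))\<^sup>2 * E2d t \<theta> \<le> kk t * Jd t \<theta>"
proof -
  have xd: "(xp t \<theta>)\<^sup>2 + (xm t \<theta>)\<^sup>2 \<le> C1 * exp (- \<beta> * t)" by (rule x_decay[OF t])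
  have XY: "\<bar>xp t \<theta> * xm t \<theta>\<bar> \<le> Xb t"
    using amgm_abs[of "xp t \<theta>" "xm t \<theta>"] xd unfolding Xb_def by (simp add: abs_mult)
  have eU: "exp (DP 0 0 t \<theta>) * exp (- t) * DQ 0 1 t \<theta> = (xp t \<theta> - xm t \<theta>) / 2"
    unfolding xp_def xm_def by (simp add: algebra_simps)
  have "((xp t \<theta> - xm t \<theta>) / 2)\<^sup>2 \<le> C1 * exp (- \<beta> * t) / 2"
  proof -
    have "((xp t \<theta> - xm t \<theta>) / 2)\<^sup>2 \<le> ((xp t \<theta>)\<^sup>2 + (xm t \<theta>)\<^sup>2) / 2"
      using sum_squares_ge_zero[of "xp t \<theta> + xm t \<theta>" 0] by (simp add: power2_eq_square field_simps)
    then show ?thesis using xd by simp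
  qed
  then have U: "\<bar>exp (DP 0 0 t \<theta>) * exp (- t) * DQ 0 1 t \<theta>\<bar> \<le> Ub t"
    unfolding eU Ub_def by (metis real_sqrt_abs real_sqrt_le_mono)
  have p: "0 \<le> DP 1 0 t \<theta>" "DP 1 0 t \<theta> \<le> 1" using drift_all(3,4)[OF t, of \<theta>] cst(6) by auto
  have h: "0 < hh t" unfolding hh_def by simp
  have al: "0 \<le> \<alpha>" using alpha by simp
  note pb = pt_bound[where a="DP 1 1 t \<theta>" and b="DP 0 1 t \<theta>" and c="DP 0 2 t \<theta>" and qy="DQ 1 1 t \<theta>" and qz="DQ 0 2 t \<theta>", OF p h al XY U]
  note ei = energy_identity[where pf="DP 1 2 t \<theta>" and qf="DQ 1 2 t \<theta>" and h="hh t" and al=\<alpha>, OF eqP_th[OF t, of \<theta>] eqQ_th[OF t, of \<theta>]]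
  show ?thesis
    using pb ei unfolding dJ_def E1d_def E2d_def Jd_def kk_def xp_def xm_def by simp
qed

end


context gw begin

definition "K2 = C1 + 4 * sqrt (C1 / 2) + 1"

lemma C1_nonneg: "0 \<le> C1" unfolding C1_def by simp

lemma kk_bound: assumes t: "\<tau>0 \<le> t" shows "kk t \<le> K2 * exp (- (\<alpha> / 4) * t)"
proof -
  have t0': "0 \<le> t" using t t0 by simp
  have 1: "2 * Xb t / hh t = C1 * exp (- (\<alpha> / 4) * t)"
  proof -
    have "exp (- \<beta> * t) / exp (- (\<alpha> / 2) * t) = exp (- (\<alpha> / 4) * t)"
      unfolding \<beta>_def by (simp add: exp_diff[symmetric] algebra_simps)
    then show ?thesis unfolding Xb_def hh_def by (metis times_divide_eq_right nonzero_mult_div_cancel_left zero_neq_numeral)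
  qed
  have 2: "Ub t \<le> sqrt (C1 / 2) * exp (- (\<alpha> / 4) * t)"
  proof -
    have a: "C1 * exp (- \<beta> * t) / 2 = (C1 / 2) * exp (- \<beta> * t)" by simp
    have "Ub t = sqrt (C1 / 2) * sqrt (exp (- \<beta> * t))" unfolding Ub_def a by (rule real_sqrt_mult)
    also have "sqrt (exp (- \<beta> * t)) = exp (- \<beta> * t / 2)" by (rule sqrt_exp)
    finally have "Ub t = sqrt (C1 / 2) * exp (- \<beta> * t / 2)" .
    also have "\<dots> \<le> sqrt (C1 / 2) * exp (- (\<alpha> / 4) * t)"
      using t0' alpha C1_nonneg unfolding \<beta>_def by (intro mult_left_mono) (simp_all add: mult_right_mono)
    finally show ?thesis .
  qed
  have 3: "hh t \<le> exp (- (\<alpha> / 4) * t)" unfolding hh_def using t0' alpha by (simp add: mult_right_mono)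
  show ?thesis unfolding kk_def K2_def using 1 2 3 by (simp add: algebra_simps)
qed

lemma deriv_bound:
  assumes t: "\<tau>0 \<le> t"
  shows "integral {0..2*pi} (dJ t) \<le> K2 * exp (- (\<alpha> / 4) * t) * (1 + integral {0..2*pi} (Jd t))"
proof -
  have idJ: "dJ t integrable_on {0..2*pi}"
    unfolding dJ_def hh_def by (intro integrable_continuous_interval continuous_intros contP_th contQ_th t)
  have i1: "E1d t integrable_on {0..2*pi}"
    unfolding E1d_def by (intro integrable_continuous_interval continuous_intros contP_th contQ_th t)
  have i2: "E2d t integrable_on {0..2*pi}"
    unfolding E2d_def by (intro integrable_continuous_interval continuous_intros contP_th contQ_th t)
  have iJ: "Jd t integrable_on {0..2*pi}" by (rule Jd_int[OF t])
  have "integral {0..2*pi} (\<lambda>\<theta>. dJ t \<theta> - (exp (- t))\<^sup>2 * E1d t \<theta> - (exp (- t))\<^sup>2 * E2d t \<theta>)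
      = integral {0..2*pi} (dJ t) - (exp (- t))\<^sup>2 * integral {0..2*pi} (E1d t) - (exp (- t))\<^sup>2 * integral {0..2*pi} (E2d t)"
    using idJ i1 i2 by (simp add: integral_diff integrable_diff integrable_on_mult_right)
  then have e: "integral {0..2*pi} (dJ t) = integral {0..2*pi} (\<lambda>\<theta>. dJ t \<theta> - (exp (- t))\<^sup>2 * E1d t \<theta> - (exp (- t))\<^sup>2 * E2d t \<theta>)"
    using E1_int[OF t] E2_int[OF t] by simp
  also have "\<dots> \<le> integral {0..2*pi} (\<lambda>\<theta>. kk t * Jd t \<theta>)"
  proof (rule integral_le)
    show "(\<lambda>\<theta>. dJ t \<theta> - (exp (- t))\<^sup>2 * E1d t \<theta> - (exp (- t))\<^sup>2 * E2d t \<theta>) integrable_on {0..2*pi}"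
      using idJ i1 i2 by (intro integrable_diff integrable_on_mult_right)
    show "(\<lambda>\<theta>. kk t * Jd t \<theta>) integrable_on {0..2*pi}" using iJ by (rule integrable_on_mult_right)
    show "\<And>x. x \<in> {0..2*pi} \<Longrightarrow> dJ t x - (exp (- t))\<^sup>2 * E1d t x - (exp (- t))\<^sup>2 * E2d t x \<le> kk t * Jd t x"
      using pointwise[OF t] by blast
  qed
  also have "\<dots> = kk t * integral {0..2*pi} (Jd t)" by simp
  also have "\<dots> \<le> K2 * exp (- (\<alpha> / 4) * t) * integral {0..2*pi} (Jd t)"
    by (rule mult_right_mono[OF kk_bound[OF t]]) (rule integral_nonneg[OF iJ Jd_nonneg])
  also have "\<dots> \<le> K2 * exp (- (\<alpha> / 4) * t) * (1 + integral {0..2*pi} (Jd t))"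
  proof -
    have "0 \<le> K2" unfolding K2_def using C1_nonneg by simp
    then show ?thesis by (simp add: algebra_simps)
  qed
  finally show ?thesis .
qed

lemma H_bounded: "\<exists>C. \<forall>t\<ge>\<tau>0. \<bar>Hk \<alpha> DP DQ 1 t\<bar> \<le> C"
proof -
  define \<rho> where "\<rho> = \<alpha> / 4"
  have \<rho>: "0 < \<rho>" using alpha by (simp add: \<rho>_def)
  define H where "H t = 1 + integral {0..2*pi} (Jd t)" for t
  define HD where "HD t = integral {0..2*pi} (dJ t)" for t
  define \<Phi> where "\<Phi> t = H t * exp (K2 / \<rho> * exp (- \<rho> * t))" for t
  have Hd: "(H has_real_derivative HD t) (at t within {\<tau>0..})" if "\<tau>0 \<le> t" for t
    unfolding H_def HD_def using int_deriv[OF that] by (auto intro!: derivative_eq_intros)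
  have Hpos: "1 \<le> H t" if "\<tau>0 \<le> t" for t
    unfolding H_def using integral_nonneg[OF Jd_int[OF that] Jd_nonneg] by simp
  have HDb: "HD t \<le> K2 * exp (- \<rho> * t) * H t" if "\<tau>0 \<le> t" for t
    unfolding HD_def H_def \<rho>_def using deriv_bound[OF that] by simp
  have \<Phi>d: "((\<lambda>t. - \<Phi> t) has_real_derivative
      - (HD t * exp (K2 / \<rho> * exp (- \<rho> * t)) + H t * (exp (K2 / \<rho> * exp (- \<rho> * t)) * (K2 / \<rho> * (exp (- \<rho> * t) * (- \<rho>))))))
      (at t within {\<tau>0..})" if "\<tau>0 \<le> t" for t
    unfolding \<Phi>_def by (auto intro!: derivative_eq_intros Hd[OF that])
  have \<Phi>le: "\<Phi> t \<le> \<Phi> \<tau>0" if t: "\<tau>0 \<le> t" for t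
  proof -
    have "- \<Phi> \<tau>0 \<le> - \<Phi> t"
    proof (rule mono_from_deriv[OF \<Phi>d _ t])
      fix u assume u: "\<tau>0 \<le> u" "u \<le> t"
      let ?ex = "exp (K2 / \<rho> * exp (- \<rho> * u))"
      have "HD u - K2 * exp (- \<rho> * u) * H u \<le> 0" using HDb[OF u(1)] by simp
      then have "?ex * (HD u - K2 * exp (- \<rho> * u) * H u) \<le> 0" by (simp add: mult_nonneg_nonpos)
      moreover have "- (HD u * ?ex + H u * (?ex * (K2 / \<rho> * (exp (- \<rho> * u) * (- \<rho>)))))
          = - (?ex * (HD u - K2 * exp (- \<rho> * u) * H u))" using \<rho> by (simp add: field_simps)
      ultimately show "0 \<le> - (HD u * ?ex + H u * (?ex * (K2 / \<rho> * (exp (- \<rho> * u) * (- \<rho>)))))" by simp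
    qed
    then show ?thesis by simp
  qed
  have "\<bar>Hk \<alpha> DP DQ 1 t\<bar> \<le> \<Phi> \<tau>0" if t: "\<tau>0 \<le> t" for t
  proof -
    have eq: "Hk \<alpha> DP DQ 1 t = H t" using Hk_eq[OF t] unfolding H_def by simp
    have "0 \<le> K2 / \<rho> * exp (- \<rho> * t)" using \<rho> C1_nonneg unfolding K2_def by simp
    then have "1 \<le> exp (K2 / \<rho> * exp (- \<rho> * t))" by simp
    then have "H t \<le> \<Phi> t" unfolding \<Phi>_def using Hpos[OF t] by (simp add: mult_le_cancel_left1)
    then show ?thesis using eq Hpos[OF t] \<Phi>le[OF t] by simp
  qed
  then show ?thesis by blast
qed

end

theorem lemma3:
  fixes P Q :: "real \<Rightarrow> real \<Rightarrow> real"
    and DP DQ :: "nat \<Rightarrow> nat \<Rightarrow> real \<Rightarrow> real \<Rightarrow> real"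
    and \<tau>0 \<gamma> \<alpha> :: real
  assumes smP: "smooth_family \<tau>0 P DP" and smQ: "smooth_family \<tau>0 Q DQ"
    and perP: "periodic_in_theta \<tau>0 P" and perQ: "periodic_in_theta \<tau>0 Q"
    and eqP: "\<And>t \<theta>. \<tau>0 \<le> t \<Longrightarrow>
       DP 2 0 t \<theta> - exp (- 2 * t) * DP 0 2 t \<theta>
       - exp (2 * P t \<theta>) * ((DQ 1 0 t \<theta>)\<^sup>2 - exp (- 2 * t) * (DQ 0 1 t \<theta>)\<^sup>2) = 0"
    and eqQ: "\<And>t \<theta>. \<tau>0 \<le> t \<Longrightarrow>
       DQ 2 0 t \<theta> - exp (- 2 * t) * DQ 0 2 t \<theta>
       + 2 * (DP 1 0 t \<theta> * DQ 1 0 t \<theta> - exp (- 2 * t) * DP 0 1 t \<theta> * DQ 0 1 t \<theta>) = 0"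
    and t0: "\<tau>0 \<ge> 2"
    and gpos: "\<gamma> > 0"
    and Pbd: "\<And>\<theta>. 1 \<le> P \<tau>0 \<theta> \<and> P \<tau>0 \<theta> \<le> \<tau>0 - 1"
    and Pgam: "\<And>\<theta>. \<gamma> \<le> P \<tau>0 \<theta> / \<tau>0 \<and> P \<tau>0 \<theta> / \<tau>0 \<le> 1 - \<gamma>"
    and alpha: "0 < \<alpha>" "\<alpha> < \<gamma>"
    and Fsmall: "Ffun DP DQ \<tau>0 \<le> (\<gamma> - \<alpha>)\<^sup>2"
  shows "\<exists>C. \<forall>t\<ge>\<tau>0. \<bar>Hk \<alpha> DP DQ 1 t\<bar> \<le> C"
proof -
  interpret gw P Q DP DQ \<tau>0 \<gamma> \<alpha>
    by (rule gw.intro[OF smP smQ perP perQ eqP eqQ t0 gpos Pbd Pgam alpha Fsmall])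
  show ?thesis by (rule H_bounded)
qed


end
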